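(* In the setting below, the rank of the free abelian group $\bar A_{\mathfrak{ab}}/\bar\rho_{\mathfrak{ab}}(\bar G_{\mathfrak{ab}})$ is $\sum_{i=1}^m|S_i|-n-m+c$, where $c$ is the number of connected components of the graph $\Lambda_{\mathcal X}$.
   Context: Let $G$ be a group generated by $a_1,\dots,a_n$ with $z=a_1\cdots a_n$ central. Let $\mathcal X=\{S_1,\dots,S_m\}$ with $S_i\subseteq\{1,\dots,n\}$ and $|S_i\cap S_r|\le1$ for $i\neq r$. For $S\subseteq\{1,\dots,n\}$ let $G_S$ be the quotient of $G$ by the normal closure of $\{a_j:j\notin S\}$; let $a_{ij}$ be the image of $a_j$ in $G_{S_i}$ and $z_i=a_{i1}\cdots a_{in}$ (central in $G_{S_i}$). Let $\bar G=G/\langle z\rangle$, $\bar G_{S_i}=G_{S_i}/\langle z_i\rangle$, and assume each $\bar G_{S_i}$ is free of rank $|S_i|-1$, the images of any $|S_i|-1$ of the $a_{ij}$, $j\in S_i$, forming a free basis. Let $A=\prod_iG_{S_i}$, $\bar A=\prod_i\bar G_{S_i}$, $\rho\colon G\to A$ the product of projections and $\bar\rho\colon\bar G\to\bar A$ the induced map. Assume $G_{\mathfrak{ab}}$ and $A_{\mathfrak{ab}}$ are free abelian with bases the images of $a_1,\dots,a_n$ and of $a_{ij}$ ($1\le i\le m$, $j\in S_i$) respectively; $\mathfrak{ab}$ denotes abelianization. $\Lambda_{\mathcal X}$ is the bipartite graph with vertex set $\{S_1,\dots,S_m\}\sqcup\{1,\dots,n\}$ and an edge $\{S_i,j\}$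 for each $j\in S_i$. *)

theory Defs
  imports "HOL-Algebra.Algebra"
begin

definition normal_closure :: "('a, 'b) monoid_scheme \<Rightarrow> 'a set \<Rightarrow> 'a set" where
  "normal_closure G Y =
     generate G {g \<otimes>\<^bsub>G\<^esub> x \<otimes>\<^bsub>G\<^esub> inv\<^bsub>G\<^esub> g | g x. g \<in> carrier G \<and> x \<in> Y}"

definition abelianization :: "('a, 'b) monoid_scheme \<Rightarrow> 'a set monoid" where
  "abelianization G = G Mod (derived G (carrier G))"

definition free_abelian_basis :: "('a, 'b) monoid_scheme \<Rightarrow> 'i set \<Rightarrow> ('i \<Rightarrow> 'a) \<Rightarrow> bool" where
  "free_abelian_basis H J b \<longleftrightarrow>
     comm_group H \<and> finite J \<and> b \<in> J \<rightarrow> carrier H \<and>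
     bij_betw (\<lambda>k. finprod H (\<lambda>j. b j [^]\<^bsub>H\<^esub> (k j :: int)) J)
              (J \<rightarrow>\<^sub>E (UNIV :: int set)) (carrier H)"

definition word_eval :: "('a, 'b) monoid_scheme \<Rightarrow> ('i \<Rightarrow> 'a) \<Rightarrow> ('i \<times> bool) list \<Rightarrow> 'a" where
  "word_eval H b w =
     foldr (\<lambda>(j, s) acc. (if s then b j else inv\<^bsub>H\<^esub> (b j)) \<otimes>\<^bsub>H\<^esub> acc) w \<one>\<^bsub>H\<^esub>"

definition reduced_word :: "('i \<times> bool) list \<Rightarrow> bool" where
  "reduced_word w \<longleftrightarrow>
     (\<forall>k. Suc k < length w \<longrightarrow>
        \<not> (fst (w ! k) = fst (w ! Suc k) \<and> snd (w ! k) \<noteq> snd (w ! Suc k)))"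

definition free_basis :: "('a, 'b) monoid_scheme \<Rightarrow> 'i set \<Rightarrow> ('i \<Rightarrow> 'a) \<Rightarrow> bool" where
  "free_basis H J b \<longleftrightarrow>
     group H \<and> b \<in> J \<rightarrow> carrier H \<and> inj_on b J \<and> generate H (b ` J) = carrier H \<and>
     (\<forall>w. w \<noteq> [] \<and> set (map fst w) \<subseteq> J \<and> reduced_word w \<longrightarrow> word_eval H b w \<noteq> \<one>\<^bsub>H\<^esub>)"

definition free_of_rank :: "('a, 'b) monoid_scheme \<Rightarrow> nat \<Rightarrow> bool" where
  "free_of_rank H r \<longleftrightarrow> (\<exists>B. finite B \<and> card B = r \<and> free_basis H B id)"

definition prod_gens :: "('a, 'b) monoid_scheme \<Rightarrow> (nat \<Rightarrow> 'a) \<Rightarrow> nat \<Rightarrow> 'a" where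
  "prod_gens G a n = foldr (\<otimes>\<^bsub>G\<^esub>) (map a [1..<Suc n]) \<one>\<^bsub>G\<^esub>"

definition kerS :: "('a, 'b) monoid_scheme \<Rightarrow> (nat \<Rightarrow> 'a) \<Rightarrow> nat \<Rightarrow> nat set \<Rightarrow> 'a set" where
  "kerS G a n S = normal_closure G (a ` ({1..n} - S))"

definition GS :: "('a, 'b) monoid_scheme \<Rightarrow> (nat \<Rightarrow> 'a) \<Rightarrow> nat \<Rightarrow> nat set \<Rightarrow> 'a set monoid" where
  "GS G a n S = G Mod (kerS G a n S)"

definition aS :: "('a, 'b) monoid_scheme \<Rightarrow> (nat \<Rightarrow> 'a) \<Rightarrow> nat \<Rightarrow> nat set \<Rightarrow> nat \<Rightarrow> 'a set" where
  "aS G a n S j = kerS G a n S #>\<^bsub>G\<^esub> a j"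

definition zS :: "('a, 'b) monoid_scheme \<Rightarrow> (nat \<Rightarrow> 'a) \<Rightarrow> nat \<Rightarrow> nat set \<Rightarrow> 'a set" where
  "zS G a n S = prod_gens (GS G a n S) (aS G a n S) n"

definition Gbar :: "('a, 'b) monoid_scheme \<Rightarrow> (nat \<Rightarrow> 'a) \<Rightarrow> nat \<Rightarrow> 'a set monoid" where
  "Gbar G a n = G Mod (generate G {prod_gens G a n})"

definition GbarS :: "('a, 'b) monoid_scheme \<Rightarrow> (nat \<Rightarrow> 'a) \<Rightarrow> nat \<Rightarrow> nat set \<Rightarrow> 'a set set monoid" where
  "GbarS G a n S = GS G a n S Mod (generate (GS G a n S) {zS G a n S})"

definition abarS :: "('a, 'b) monoid_scheme \<Rightarrow> (nat \<Rightarrow> 'a) \<Rightarrow> nat \<Rightarrow> nat set \<Rightarrow> nat \<Rightarrow> 'a set set" where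
  "abarS G a n S j = generate (GS G a n S) {zS G a n S} #>\<^bsub>GS G a n S\<^esub> aS G a n S j"

definition Aprod :: "('a, 'b) monoid_scheme \<Rightarrow> (nat \<Rightarrow> 'a) \<Rightarrow> nat \<Rightarrow> nat \<Rightarrow> (nat \<Rightarrow> nat set)
    \<Rightarrow> (nat \<Rightarrow> 'a set) monoid" where
  "Aprod G a n m S = product_group {1..m} (\<lambda>i. GS G a n (S i))"

definition Abar :: "('a, 'b) monoid_scheme \<Rightarrow> (nat \<Rightarrow> 'a) \<Rightarrow> nat \<Rightarrow> nat \<Rightarrow> (nat \<Rightarrow> nat set)
    \<Rightarrow> (nat \<Rightarrow> 'a set set) monoid" where
  "Abar G a n m S = product_group {1..m} (\<lambda>i. GbarS G a n (S i))"

definition aA :: "('a, 'b) monoid_scheme \<Rightarrow> (nat \<Rightarrow> 'a) \<Rightarrow> nat \<Rightarrow> nat \<Rightarrow> (nat \<Rightarrow> nat set)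
    \<Rightarrow> nat \<times> nat \<Rightarrow> nat \<Rightarrow> 'a set" where
  "aA G a n m S ij = (\<lambda>i'\<in>{1..m}. if i' = fst ij then aS G a n (S i') (snd ij)
                                   else \<one>\<^bsub>GS G a n (S i')\<^esub>)"

definition rho_bar :: "('a, 'b) monoid_scheme \<Rightarrow> (nat \<Rightarrow> 'a) \<Rightarrow> nat \<Rightarrow> nat \<Rightarrow> (nat \<Rightarrow> nat set)
    \<Rightarrow> 'a set \<Rightarrow> nat \<Rightarrow> 'a set set" where
  "rho_bar G a n m S C =
     (\<lambda>i\<in>{1..m}. generate (GS G a n (S i)) {zS G a n (S i)}
                   #>\<^bsub>GS G a n (S i)\<^esub> (kerS G a n (S i) #>\<^bsub>G\<^esub> (SOME g. g \<in> C)))"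

definition rho_bar_ab :: "('a, 'b) monoid_scheme \<Rightarrow> (nat \<Rightarrow> 'a) \<Rightarrow> nat \<Rightarrow> nat \<Rightarrow> (nat \<Rightarrow> nat set)
    \<Rightarrow> 'a set set \<Rightarrow> (nat \<Rightarrow> 'a set set) set" where
  "rho_bar_ab G a n m S x =
     derived (Abar G a n m S) (carrier (Abar G a n m S))
       #>\<^bsub>Abar G a n m S\<^esub> rho_bar G a n m S (SOME C. C \<in> x)"

definition Lambda_vertices :: "nat \<Rightarrow> nat \<Rightarrow> (nat + nat) set" where
  "Lambda_vertices m n = Inl ` {1..m} \<union> Inr ` {1..n}"

definition Lambda_edges :: "nat \<Rightarrow> (nat \<Rightarrow> nat set) \<Rightarrow> ((nat + nat) \<times> (nat + nat)) set" where
  "Lambda_edges m S = {(Inl i, Inr j) | i j. i \<in> {1..m} \<and> j \<in> S i}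
                    \<union> {(Inr j, Inl i) | i j. i \<in> {1..m} \<and> j \<in> S i}"

definition num_components :: "'v set \<Rightarrow> ('v \<times> 'v) set \<Rightarrow> nat" where
  "num_components V E = card (V // ((E\<^sup>* ) \<inter> (V \<times> V)))"

end

theory Submission
  imports Defs "HOL-Library.Function_Algebras"
begin


definition Zf :: "'a set \<Rightarrow> ('a \<Rightarrow> int) set" where
  "Zf A = {f. \<forall>x. x \<notin> A \<longrightarrow> f x = 0}"

definition delta :: "'e set \<Rightarrow> ('e \<Rightarrow> 'v) \<Rightarrow> ('e \<Rightarrow> 'v) \<Rightarrow> ('v \<Rightarrow> int) \<Rightarrow> 'e \<Rightarrow> int" where
  "delta D src tgt g = (\<lambda>e. if e \<in> D then g (src e) - g (tgt e) else 0)"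

definition grel :: "'e set \<Rightarrow> ('e \<Rightarrow> 'v) \<Rightarrow> ('e \<Rightarrow> 'v) \<Rightarrow> ('v \<times> 'v) set" where
  "grel D src tgt = {(src e, tgt e) | e. e \<in> D} \<union> {(tgt e, src e) | e. e \<in> D}"

definition additive :: "('a \<Rightarrow> int) set \<Rightarrow> (('a \<Rightarrow> int) \<Rightarrow> ('b \<Rightarrow> int)) \<Rightarrow> bool" where
  "additive A F \<longleftrightarrow> (\<forall>f\<in>A. \<forall>f'\<in>A. F (f + f') = F f + F f')"

lemma Zf_add: "f \<in> Zf A \<Longrightarrow> g \<in> Zf A \<Longrightarrow> f + g \<in> Zf A"
  by (auto simp: Zf_def)
lemma Zf_zero: "0 \<in> Zf A" by (auto simp: Zf_def)

lemma additive_zero: "additive (Zf A) F \<Longrightarrow> F 0 = 0"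
  unfolding additive_def using Zf_zero[of A]
  by (metis add_cancel_left_left add_0)

lemma rtrancl_const:
  assumes "\<forall>d\<in>D. g (src d) = g (tgt d)" "(u, w) \<in> (grel D src tgt)\<^sup>*"
  shows "g u = g w"
  using assms(2)
proof (induction rule: rtrancl_induct)
  case base then show ?case by simp
next
  case (step y z) then show ?case using assms(1) by (auto simp: grel_def)
qed

lemma delta_zero_const:
  assumes "delta D src tgt g = 0" "(u, w) \<in> (grel D src tgt)\<^sup>*"
  shows "g u = g w"
proof -
  have "\<forall>d\<in>D. g (src d) = g (tgt d)"
  proof
    fix d assume "d \<in> D"
    then have "delta D src tgt g d = 0" using assms(1) by simp
    then show "g (src d) = g (tgt d)" using \<open>d \<in> D\<close> by (simp add: delta_def)
  qed
  then show ?thesis using rtrancl_const assms(2) by metis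
qed

lemma grel_sym: "sym ((grel D src tgt)\<^sup>*)"
proof -
  have "sym (grel D src tgt)" by (auto simp: grel_def sym_def)
  then show ?thesis by (simp add: sym_rtrancl)
qed

lemma grel_insert: "grel (insert e D) src tgt = grel D src tgt \<union> {(src e, tgt e), (tgt e, src e)}"
  by (auto simp: grel_def)


lemma R'_char:
  assumes ns: "(src e, tgt e) \<notin> (grel D src tgt)\<^sup>*"
  shows "(u,w) \<in> (grel (insert e D) src tgt)\<^sup>* \<longleftrightarrow>
    ((u,w) \<in> (grel D src tgt)\<^sup>* \<or>
       ((u, src e) \<in> (grel D src tgt)\<^sup>* \<and> (tgt e, w) \<in> (grel D src tgt)\<^sup>*) \<or>
       ((u, tgt e) \<in> (grel D src tgt)\<^sup>* \<and> (src e, w) \<in> (grel D src tgt)\<^sup>*))" (is "?L \<longleftrightarrow> ?P u w")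
proof
  let ?R = "(grel D src tgt)\<^sup>*"
  have sy: "\<And>a b. (a,b) \<in> ?R \<Longrightarrow> (b,a) \<in> ?R" using grel_sym[of D src tgt] by (meson symD)
  have tr: "\<And>a b c. (a,b) \<in> ?R \<Longrightarrow> (b,c) \<in> ?R \<Longrightarrow> (a,c) \<in> ?R" by (meson rtrancl_trans)
  assume ?L
  then show "?P u w"
  proof (induction rule: rtrancl_induct)
    case base then show ?case by simp
  next
    case (step v t)
    have "(v,t) \<in> grel D src tgt \<or> (v,t) = (src e, tgt e) \<or> (v,t) = (tgt e, src e)"
      using step(2) by (auto simp: grel_insert)
    moreover note IH = step(3)
    have rf: "\<And>a. (a,a) \<in> ?R" by simp
    ultimately show ?case
    proof -
      assume h: "(v,t) \<in> grel D src tgt \<or> (v,t) = (src e, tgt e) \<or> (v,t) = (tgt e, src e)"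
      consider "(v,t) \<in> grel D src tgt" | "v = src e" "t = tgt e" | "v = tgt e" "t = src e"
        using h by auto
      then show ?case
      proof cases
        case 1 then have vt: "(v,t) \<in> ?R" by auto
        show ?thesis using IH vt tr by blast
      next
        case 2 show ?thesis using IH 2 rf ns sy by blast
      next
        case 3 show ?thesis using IH 3 rf ns sy by blast
      qed
    qed
  qed
next
  let ?R = "(grel D src tgt)\<^sup>*"
  let ?L' = "(grel (insert e D) src tgt)\<^sup>*"
  have sub: "?R \<subseteq> ?L'" by (rule rtrancl_mono) (auto simp: grel_insert)
  have e1: "(src e, tgt e) \<in> ?L'" by (auto simp: grel_insert)
  have e2: "(tgt e, src e) \<in> ?L'" by (auto simp: grel_insert)
  assume "?P u w"
  then show ?L
  proof (elim disjE)
    assume "(u,w) \<in> ?R" then show ?L using sub by auto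
  next
    assume "(u, src e) \<in> ?R \<and> (tgt e, w) \<in> ?R"
    then have "(u, src e) \<in> ?L'" "(tgt e, w) \<in> ?L'" using sub by auto
    then show ?L using e1 by (meson rtrancl_trans)
  next
    assume "(u, tgt e) \<in> ?R \<and> (src e, w) \<in> ?R"
    then have "(u, tgt e) \<in> ?L'" "(src e, w) \<in> ?L'" using sub by auto
    then show ?L using e2 by (meson rtrancl_trans)
  qed
qed

lemma quotient_img: "A // r = (\<lambda>v. r `` {v}) ` A"
  by (auto simp: quotient_def)

lemma card_comps_disconn:
  assumes fin: "finite V" and xV: "src e \<in> V" and yV: "tgt e \<in> V"
    and ns: "(src e, tgt e) \<notin> (grel D src tgt)\<^sup>*"
  shows "card (V // ((grel (insert e D) src tgt)\<^sup>* \<inter> V \<times> V)) + 1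
       = card (V // ((grel D src tgt)\<^sup>* \<inter> V \<times> V))"
proof -
  let ?R = "(grel D src tgt)\<^sup>*"
  let ?R' = "(grel (insert e D) src tgt)\<^sup>*"
  define x where "x = src e"
  define y where "y = tgt e"
  have sy: "\<And>a b. (a,b) \<in> ?R \<Longrightarrow> (b,a) \<in> ?R" using grel_sym[of D src tgt] by (meson symD)
  have tr: "\<And>a b c. (a,b) \<in> ?R \<Longrightarrow> (b,c) \<in> ?R \<Longrightarrow> (a,c) \<in> ?R" by (meson rtrancl_trans)
  have R'c: "\<And>u w. (u,w) \<in> ?R' \<longleftrightarrow> (u,w) \<in> ?R \<or> ((u,x) \<in> ?R \<and> (y,w) \<in> ?R) \<or> ((u,y) \<in> ?R \<and> (x,w) \<in> ?R)"
    unfolding x_def y_def by (rule R'_char[OF ns])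
  define C where "C = {v \<in> V. (x,v) \<in> ?R \<or> (y,v) \<in> ?R}"
  define c0 where "c0 = (\<lambda>v. (?R \<inter> V \<times> V) `` {v})"
  define c1 where "c1 = (\<lambda>v. (?R' \<inter> V \<times> V) `` {v})"
  have c0m: "w \<in> c0 v \<longleftrightarrow> (v,w) \<in> ?R \<and> v \<in> V \<and> w \<in> V" for v w unfolding c0_def by auto
  have c1m: "w \<in> c1 v \<longleftrightarrow> (v,w) \<in> ?R' \<and> v \<in> V \<and> w \<in> V" for v w unfolding c1_def by auto
  have nxy: "(x,y) \<notin> ?R" using ns x_def y_def by simp
  have c1out: "c1 v = c0 v" if "v \<in> V - C" for v
  proof (rule Set.set_eqI)
    fix w
    have "(v,x) \<notin> ?R" "(v,y) \<notin> ?R" using that sy unfolding C_def by auto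
    then show "w \<in> c1 v \<longleftrightarrow> w \<in> c0 v" by (simp add: c0m c1m R'c)
  qed
  have c1in: "c1 v = C" if "v \<in> C" for v
  proof -
    have key: "(v,w) \<in> ?R' \<longleftrightarrow> ((x,w) \<in> ?R \<or> (y,w) \<in> ?R)" for w
    proof (cases "(x,v) \<in> ?R")
      case True
      then have vx: "(v,x) \<in> ?R" using sy by blast
      show ?thesis unfolding R'c using vx tr[OF sy[OF vx]] tr[OF vx] by auto
    next
      case False
      then have "(y,v) \<in> ?R" using that C_def by auto
      then have vy: "(v,y) \<in> ?R" using sy by blast
      show ?thesis unfolding R'c using vy tr[OF sy[OF vy]] tr[OF vy] by auto
    qed
    have vV: "v \<in> V" using that C_def by auto
    show ?thesis
    proof (rule Set.set_eqI)
      fix w show "w \<in> c1 v \<longleftrightarrow> w \<in> C" unfolding c1m C_def mem_Collect_eq key using vV by auto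
    qed
  qed
  have CV: "C \<subseteq> V" unfolding C_def by blast
  have VC: "(V - C) \<union> C = V" using CV by blast
  have xC: "x \<in> C" using xV unfolding C_def x_def by auto
  have yC: "y \<in> C" using yV unfolding C_def y_def by auto
  have q1: "V // (?R' \<inter> V \<times> V) = c0 ` (V - C) \<union> {C}"
  proof -
    have "V // (?R' \<inter> V \<times> V) = c1 ` V" unfolding quotient_img c1_def by simp
    also have "\<dots> = c1 ` (V - C) \<union> c1 ` C" by (simp only: image_Un[symmetric] VC)
    also have "c1 ` (V - C) = c0 ` (V - C)" by (rule image_cong[OF refl c1out])
    also have "c1 ` C = (\<lambda>_. C) ` C" by (rule image_cong[OF refl c1in])
    also have "\<dots> = {C}" using xC by auto
    finally show ?thesis .
  qed
  have eqc: "c0 a = c0 b" if "(a,b) \<in> ?R" "a \<in> V" "b \<in> V" for a b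
  proof (rule Set.set_eqI)
    fix w show "w \<in> c0 a \<longleftrightarrow> w \<in> c0 b" unfolding c0m using that tr[OF sy[OF that(1)]] tr[OF that(1)] by auto
  qed
  have q0: "V // (?R \<inter> V \<times> V) = c0 ` (V - C) \<union> {c0 x, c0 y}"
  proof -
    have "V // (?R \<inter> V \<times> V) = c0 ` V" unfolding quotient_img c0_def by simp
    also have "\<dots> = c0 ` (V - C) \<union> c0 ` C" by (simp only: image_Un[symmetric] VC)
    also have "c0 ` C = {c0 x, c0 y}"
    proof
      show "c0 ` C \<subseteq> {c0 x, c0 y}"
      proof
        fix s assume "s \<in> c0 ` C"
        then obtain v where v: "v \<in> C" "s = c0 v" by auto
        show "s \<in> {c0 x, c0 y}"
        proof (cases "(x,v) \<in> ?R")
          have "v \<in> V" using v(1) CV by auto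
          case True then show ?thesis using eqc[OF True] v(2) \<open>v \<in> V\<close> xC CV by auto
        next
          case False then have "(y,v) \<in> ?R" using v(1) C_def by auto
          then show ?thesis using eqc v(1,2) yC CV by auto
        qed
      qed
      show "{c0 x, c0 y} \<subseteq> c0 ` C" using xC yC by blast
    qed
    finally show ?thesis .
  qed
  have fi: "finite (c0 ` (V - C))" using fin by simp
  have vin: "v \<in> c0 v" if "v \<in> V" for v using that c0m by simp
  have nC: "C \<notin> c0 ` (V - C)"
  proof
    assume "C \<in> c0 ` (V - C)"
    then obtain v where "v \<in> V - C" "C = c0 v" by auto
    then show False using vin by auto
  qed
  have nx: "c0 x \<notin> c0 ` (V - C)"
  proof
    assume "c0 x \<in> c0 ` (V - C)"
    then obtain v where v: "v \<in> V - C" "c0 x = c0 v" by auto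
    then have "v \<in> c0 x" using vin by auto
    then have "(x,v) \<in> ?R" using c0m by simp
    then show False using v(1) unfolding C_def by auto
  qed
  have ny: "c0 y \<notin> c0 ` (V - C)"
  proof
    assume "c0 y \<in> c0 ` (V - C)"
    then obtain v where v: "v \<in> V - C" "c0 y = c0 v" by auto
    then have "v \<in> c0 y" using vin by auto
    then have "(y,v) \<in> ?R" using c0m by simp
    then show False using v(1) unfolding C_def by auto
  qed
  have xy: "c0 x \<noteq> c0 y"
  proof
    assume "c0 x = c0 y"
    then have "y \<in> c0 x" using vin yV y_def by auto
    then show False using nxy c0m by simp
  qed
  have "card (c0 ` (V - C) \<union> {C}) = card (c0 ` (V - C)) + 1" using fi nC by simp
  moreover have "card (c0 ` (V - C) \<union> {c0 x, c0 y}) = card (c0 ` (V - C)) + 2"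
    using fi nx ny xy by simp
  ultimately show ?thesis unfolding q0 q1 by simp
qed

lemma comps_conn:
  assumes c: "(src e, tgt e) \<in> (grel D src tgt)\<^sup>*"
  shows "(grel (insert e D) src tgt)\<^sup>* = (grel D src tgt)\<^sup>*"
proof
  have sy: "(tgt e, src e) \<in> (grel D src tgt)\<^sup>*" using c grel_sym[of D src tgt] by (meson symD)
  have "grel (insert e D) src tgt \<subseteq> (grel D src tgt)\<^sup>*" using c sy by (auto simp: grel_insert)
  then show "(grel (insert e D) src tgt)\<^sup>* \<subseteq> (grel D src tgt)\<^sup>*"
    by (metis rtrancl_subset_rtrancl)
  show "(grel D src tgt)\<^sup>* \<subseteq> (grel (insert e D) src tgt)\<^sup>*"
    by (rule rtrancl_mono) (auto simp: grel_insert)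
qed

lemma card_comps_empty:
  assumes "finite V"
  shows "card (V // ((grel {} src tgt)\<^sup>* \<inter> V \<times> V)) = card V"
proof -
  have "grel {} src tgt = {}" by (simp add: grel_def)
  then have "V // ((grel {} src tgt)\<^sup>* \<inter> V \<times> V) = (\<lambda>v. {v}) ` V"
    unfolding quotient_img by auto
  moreover have "inj_on (\<lambda>v. {v}) V" by (auto simp: inj_on_def)
  ultimately show ?thesis by (simp add: card_image)
qed



definition ginv where
  "ginv V D src tgt K T sg rh \<longleftrightarrow>
     K \<subseteq> D \<and> (\<forall>f\<in>Zf D. T f \<in> Zf K) \<and> additive (Zf D) T \<and>
     (\<forall>h\<in>Zf K. sg h \<in> Zf D) \<and> additive (Zf K) sg \<and> (\<forall>h\<in>Zf K. T (sg h) = h) \<and>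
     additive (Zf D) rh \<and> (\<forall>f\<in>Zf D. f = delta D src tgt (rh f) + sg (T f)) \<and>
     (\<forall>g. T (delta D src tgt g) = 0)"

lemma ginv_imp: "ginv V D src tgt K T sg rh \<Longrightarrow> K \<subseteq> D \<and> (\<forall>f\<in>Zf D. T f \<in> Zf K) \<and> additive (Zf D) T \<and>
     (\<forall>h\<in>Zf K. sg h \<in> Zf D) \<and> additive (Zf K) sg \<and> (\<forall>h\<in>Zf K. T (sg h) = h) \<and>
     additive (Zf D) rh \<and> (\<forall>f\<in>Zf D. f = delta D src tgt (rh f) + sg (T f)) \<and>
     (\<forall>g. T (delta D src tgt g) = 0)"
  unfolding ginv_def by assumption

lemmas ginvD = ginv_imp[THEN conjunct1] ginv_imp[THEN conjunct2, THEN conjunct1] ginv_imp[THEN conjunct2, THEN conjunct2, THEN conjunct1] ginv_imp[THEN conjunct2, THEN conjunct2, THEN conjunct2, THEN conjunct1] ginv_imp[THEN conjunct2, THEN conjunct2, THEN conjunct2, THEN conjunct2, THEN conjunct1] ginv_imp[THEN conjunct2, THEN conjunct2, THEN conjunct2, THEN conjunct2, THEN conjunct2, THEN conjunct1] ginv_imp[THEN conjunct2, THEN conjunct2, THEN conjunct2, THEN conjunct2, THEN conjunct2, THEN conjunct2, THEN conjunct1] ginv_imp[THEN conjunct2, THEN conjunct2, THEN conjunct2, THEN conjunct2, THEN conjunct2, THEN conjunct2, THEN conjunct2, THEN conjunct1] ginv_imp[THEN conjunct2, THEN conjunct2, THEN conjunct2, THEN conjunct2, THEN conjunct2, THEN conjunct2,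 THEN conjunct2, THEN conjunct2]

lemma additiveD: "additive A F \<Longrightarrow> f \<in> A \<Longrightarrow> g \<in> A \<Longrightarrow> F (f + g) = F f + F g"
  by (simp add: additive_def)

lemma delta_Zf: "delta D src tgt g \<in> Zf D" by (simp add: delta_def Zf_def)

lemma delta_diff: "delta D src tgt (g - g') = delta D src tgt g - delta D src tgt g'"
  by (auto simp: delta_def)

lemma upd_Zf: "f \<in> Zf (insert e D) \<Longrightarrow> f(e := 0) \<in> Zf D"
  by (auto simp: Zf_def)

lemma Zf_mono: "f \<in> Zf D \<Longrightarrow> D \<subseteq> D' \<Longrightarrow> f \<in> Zf D'"
  by (auto simp: Zf_def)

lemma upd_add: "(f + g)(e := (0::int)) = f(e := 0) + g(e := 0)"
  by auto

lemma Zf_out: "f \<in> Zf D \<Longrightarrow> e \<notin> D \<Longrightarrow> f e = 0" by (simp add: Zf_def)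

lemma delta_insert_restr: "e \<notin> D \<Longrightarrow> (delta (insert e D) src tgt g)(e := 0) = delta D src tgt g"
  by (auto simp: delta_def)

lemma ginv_step_conn:
  assumes inv: "ginv V D src tgt K T sg rh" and eD: "e \<notin> D"
    and conn: "(src e, tgt e) \<in> (grel D src tgt)\<^sup>*"
  shows "ginv V (insert e D) src tgt (insert e K)
     (\<lambda>f. (T (f(e:=0)))(e := f e - (rh (f(e:=0)) (src e) - rh (f(e:=0)) (tgt e))))
     (\<lambda>h. (sg (h(e:=0)))(e := h e))
     (\<lambda>f. rh (f(e:=0)))"
proof -
  let ?x = "src e" and ?y = "tgt e"
  let ?D = "insert e D"
  note I = inv[unfolded ginv_def]
  have KD: "K \<subseteq> D" and TZ: "\<And>f. f \<in> Zf D \<Longrightarrow> T f \<in> Zf K" and Ta: "additive (Zf D) T"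
    and sZ: "\<And>h. h \<in> Zf K \<Longrightarrow> sg h \<in> Zf D" and sa: "additive (Zf K) sg"
    and Ts: "\<And>h. h \<in> Zf K \<Longrightarrow> T (sg h) = h" and ra: "additive (Zf D) rh"
    and dec: "\<And>f. f \<in> Zf D \<Longrightarrow> f = delta D src tgt (rh f) + sg (T f)"
    and Td: "\<And>g. T (delta D src tgt g) = 0"
    using I[THEN conjunct1] I[THEN conjunct2, THEN conjunct1] I[THEN conjunct2, THEN conjunct2, THEN conjunct1]
      I[THEN conjunct2, THEN conjunct2, THEN conjunct2, THEN conjunct1]
      I[THEN conjunct2, THEN conjunct2, THEN conjunct2, THEN conjunct2, THEN conjunct1]
      I[THEN conjunct2, THEN conjunct2, THEN conjunct2, THEN conjunct2, THEN conjunct2, THEN conjunct1]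
      I[THEN conjunct2, THEN conjunct2, THEN conjunct2, THEN conjunct2, THEN conjunct2, THEN conjunct2, THEN conjunct1]
      I[THEN conjunct2, THEN conjunct2, THEN conjunct2, THEN conjunct2, THEN conjunct2, THEN conjunct2, THEN conjunct2, THEN conjunct1]
      I[THEN conjunct2, THEN conjunct2, THEN conjunct2, THEN conjunct2, THEN conjunct2, THEN conjunct2, THEN conjunct2, THEN conjunct2]
    by (simp_all only: Ball_def)
  have eK: "e \<notin> K" using KD eD by auto
  have sg0: "sg 0 = 0" using additive_zero[OF sa] .
  have const: "g ?x = g ?y" if "delta D src tgt g = 0" for g
    using delta_zero_const[OF that conn] .
  have rsg: "rh (sg h) ?x = rh (sg h) ?y" if "h \<in> Zf K" for h
  proof -
    have "sg h = delta D src tgt (rh (sg h)) + sg h" using dec[OF sZ[OF that]] Ts[OF that] by simp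
    then have "delta D src tgt (rh (sg h)) = 0" by (metis add_cancel_right_left)
    then show ?thesis using const by blast
  qed
  have rd: "rh (delta D src tgt g) ?x - rh (delta D src tgt g) ?y = g ?x - g ?y" for g
  proof -
    have "delta D src tgt g = delta D src tgt (rh (delta D src tgt g))"
      using dec[OF delta_Zf] Td sg0 by (metis add.right_neutral)
    then have "delta D src tgt (g - rh (delta D src tgt g)) = 0" by (simp add: delta_diff)
    from const[OF this] show ?thesis by simp
  qed
  show ?thesis unfolding ginv_def
  proof (intro conjI ballI allI)
    show "insert e K \<subseteq> ?D" using KD by auto
  next
    fix f assume f: "f \<in> Zf ?D"
    show "(T (f(e:=0)))(e := f e - (rh (f(e:=0)) ?x - rh (f(e:=0)) ?y)) \<in> Zf (insert e K)"
      using TZ[OF upd_Zf[OF f]] by (auto simp: Zf_def)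
  next
    show "additive (Zf ?D) (\<lambda>f. (T (f(e:=0)))(e := f e - (rh (f(e:=0)) ?x - rh (f(e:=0)) ?y)))"
      unfolding additive_def
    proof (intro ballI)
      fix f f' assume f: "f \<in> Zf ?D" and f': "f' \<in> Zf ?D"
      have T1: "T ((f + f')(e:=0)) = T (f(e:=0)) + T (f'(e:=0))"
        by (simp only: upd_add additiveD[OF Ta upd_Zf[OF f] upd_Zf[OF f']])
      have r1: "rh ((f + f')(e:=0)) = rh (f(e:=0)) + rh (f'(e:=0))"
        by (simp only: upd_add additiveD[OF ra upd_Zf[OF f] upd_Zf[OF f']])
      show "(T ((f + f')(e:=0)))(e := (f + f') e - (rh ((f + f')(e:=0)) ?x - rh ((f + f')(e:=0)) ?y)) =
         (T (f(e:=0)))(e := f e - (rh (f(e:=0)) ?x - rh (f(e:=0)) ?y)) +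
         (T (f'(e:=0)))(e := f' e - (rh (f'(e:=0)) ?x - rh (f'(e:=0)) ?y))"
        unfolding T1 r1 by (rule ext) auto
    qed
  next
    fix h assume h: "h \<in> Zf (insert e K)"
    have h0: "h(e:=0) \<in> Zf K" using upd_Zf[OF h] .
    show "(sg (h(e:=0)))(e := h e) \<in> Zf ?D" using sZ[OF h0] by (auto simp: Zf_def)
  next
    show "additive (Zf (insert e K)) (\<lambda>h. (sg (h(e:=0)))(e := h e))"
      unfolding additive_def
    proof (intro ballI)
      fix h h' assume h: "h \<in> Zf (insert e K)" and h': "h' \<in> Zf (insert e K)"
      have "sg ((h + h')(e:=0)) = sg (h(e:=0)) + sg (h'(e:=0))"
        by (simp only: upd_add additiveD[OF sa upd_Zf[OF h] upd_Zf[OF h']])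
      then show "(sg ((h + h')(e:=0)))(e := (h + h') e) = (sg (h(e:=0)))(e := h e) + (sg (h'(e:=0)))(e := h' e)"
        by (intro ext) auto
    qed
  next
    fix h assume h: "h \<in> Zf (insert e K)"
    have h0: "h(e:=0) \<in> Zf K" using upd_Zf[OF h] .
    have s0: "((sg (h(e:=0)))(e := h e))(e := 0) = sg (h(e:=0))"
      using Zf_out[OF sZ[OF h0] eD] by (intro ext) auto
    have "(T (sg (h(e:=0))))(e := h e - (rh (sg (h(e:=0))) ?x - rh (sg (h(e:=0))) ?y)) = h"
      using Ts[OF h0] rsg[OF h0] by (intro ext) auto
    then show "(T (((sg (h(e:=0)))(e := h e))(e:=0)))(e := ((sg (h(e:=0)))(e := h e)) e -
        (rh (((sg (h(e:=0)))(e := h e))(e:=0)) ?x - rh (((sg (h(e:=0)))(e := h e))(e:=0)) ?y)) = h"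
      unfolding s0 by simp
  next
    show "additive (Zf ?D) (\<lambda>f. rh (f(e:=0)))"
      unfolding additive_def by (intro ballI) (simp only: upd_add additiveD[OF ra upd_Zf upd_Zf])
  next
    fix f assume f: "f \<in> Zf ?D"
    have f0: "f(e:=0) \<in> Zf D" using upd_Zf[OF f] .
    have Te: "(T (f(e:=0))) e = 0" using Zf_out[OF TZ[OF f0] eK] .
    have Tu: "((T (f(e:=0)))(e := f e - (rh (f(e:=0)) ?x - rh (f(e:=0)) ?y)))(e := 0) = T (f(e:=0))"
      using Te by (intro ext) auto
    have d0: "f(e:=0) = delta D src tgt (rh (f(e:=0))) + sg (T (f(e:=0)))" using dec[OF f0] .
    have eq: "f d = (delta ?D src tgt (rh (f(e:=0))) + (sg (T (f(e:=0))))(e := f e - (rh (f(e:=0)) ?x - rh (f(e:=0)) ?y))) d" for d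
    proof (cases "d = e")
      case True then show ?thesis by (simp add: delta_def)
    next
      case False
      have "f d = (f(e:=0)) d" using False by simp
      also have "\<dots> = delta D src tgt (rh (f(e:=0))) d + sg (T (f(e:=0))) d"
        using fun_cong[OF d0, of d] by (simp only: plus_fun_apply)
      finally show ?thesis using False eD by (simp add: delta_def)
    qed
    show "f = delta ?D src tgt (rh (f(e:=0))) +
      (\<lambda>h. (sg (h(e:=0)))(e := h e)) ((T (f(e:=0)))(e := f e - (rh (f(e:=0)) ?x - rh (f(e:=0)) ?y)))"
      unfolding Tu fun_upd_same by (rule ext, rule eq)
  next
    fix g
    have r: "(delta ?D src tgt g)(e := 0) = delta D src tgt g" using delta_insert_restr[OF eD] .
    show "(T ((delta ?D src tgt g)(e:=0)))(e := delta ?D src tgt g e -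
       (rh ((delta ?D src tgt g)(e:=0)) ?x - rh ((delta ?D src tgt g)(e:=0)) ?y)) = 0"
      unfolding r Td using rd[of g] by (intro ext) (simp add: delta_def)
  qed
qed


lemma ginv_step_disconn:
  assumes inv: "ginv V D src tgt K T sg rh" and eD: "e \<notin> D"
    and nconn: "(src e, tgt e) \<notin> (grel D src tgt)\<^sup>*"
  shows "ginv V (insert e D) src tgt K
     (\<lambda>f. T (f(e:=0))) sg
     (\<lambda>f. rh (f(e:=0)) + (\<lambda>v. (f e - (rh (f(e:=0)) (src e) - rh (f(e:=0)) (tgt e))) *
          (if (src e, v) \<in> (grel D src tgt)\<^sup>* then 1 else 0)))"
proof -
  let ?x = "src e" and ?y = "tgt e"
  let ?D = "insert e D"
  let ?R = "(grel D src tgt)\<^sup>*"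
  define chi :: "_ \<Rightarrow> int" where "chi = (\<lambda>v. if (?x, v) \<in> ?R then 1 else 0)"
  note I = inv[unfolded ginv_def]
  have KD: "K \<subseteq> D" and TZ: "\<forall>f\<in>Zf D. T f \<in> Zf K" and Ta: "additive (Zf D) T"
    and sZ: "\<forall>h\<in>Zf K. sg h \<in> Zf D" and sa: "additive (Zf K) sg"
    and Ts: "\<forall>h\<in>Zf K. T (sg h) = h" and ra: "additive (Zf D) rh"
    and dec: "\<forall>f\<in>Zf D. f = delta D src tgt (rh f) + sg (T f)"
    and Td: "\<forall>g. T (delta D src tgt g) = 0"
    using ginvD[OF inv] by -
  have sy: "\<And>a b. (a,b) \<in> ?R \<Longrightarrow> (b,a) \<in> ?R" using grel_sym[of D src tgt] by (meson symD)
  have chi_edge: "chi (src d) = chi (tgt d)" if "d \<in> D" for d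
  proof -
    have "(src d, tgt d) \<in> ?R" using that by (auto simp: grel_def)
    then have "(tgt d, src d) \<in> ?R" using sy by blast
    then show ?thesis using \<open>(src d, tgt d) \<in> ?R\<close> unfolding chi_def by (meson rtrancl_trans)
  qed
  have chix: "chi ?x = 1" by (simp add: chi_def)
  have chiy: "chi ?y = 0" using nconn by (simp add: chi_def)
  have eqrh: "(\<lambda>f. rh (f(e:=0)) + (\<lambda>v. (f e - (rh (f(e:=0)) ?x - rh (f(e:=0)) ?y)) *
          (if (?x, v) \<in> ?R then 1 else 0))) =
        (\<lambda>f. rh (f(e:=0)) + (\<lambda>v. (f e - (rh (f(e:=0)) ?x - rh (f(e:=0)) ?y)) * chi v))"
    unfolding chi_def by simp
  show ?thesis unfolding ginv_def eqrh
  proof (intro conjI ballI allI)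
    show "K \<subseteq> ?D" using KD by auto
  next
    fix f assume f: "f \<in> Zf ?D"
    show "T (f(e:=0)) \<in> Zf K" using TZ upd_Zf[OF f] by blast
  next
    show "additive (Zf ?D) (\<lambda>f. T (f(e:=0)))"
      unfolding additive_def by (intro ballI) (simp only: upd_add additiveD[OF Ta upd_Zf upd_Zf])
  next
    fix h assume h: "h \<in> Zf K"
    show "sg h \<in> Zf ?D" using sZ h Zf_mono[of _ D ?D] by blast
  next
    show "additive (Zf K) sg" by (rule sa)
  next
    fix h assume h: "h \<in> Zf K"
    have s1: "sg h \<in> Zf D" using sZ h by blast
    have "(sg h)(e := 0) = sg h" using Zf_out[OF s1 eD] by (intro ext) auto
    then show "T ((sg h)(e:=0)) = h" using Ts h by simp
  next
    show "additive (Zf ?D) (\<lambda>f. rh (f(e:=0)) + (\<lambda>v. (f e - (rh (f(e:=0)) ?x - rh (f(e:=0)) ?y)) * chi v))"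
      unfolding additive_def
    proof (intro ballI)
      fix f f' assume f: "f \<in> Zf ?D" and f': "f' \<in> Zf ?D"
      have r1: "rh ((f + f')(e:=0)) = rh (f(e:=0)) + rh (f'(e:=0))"
        by (simp only: upd_add additiveD[OF ra upd_Zf[OF f] upd_Zf[OF f']])
      show "rh ((f + f')(e:=0)) + (\<lambda>v. ((f + f') e - (rh ((f + f')(e:=0)) ?x - rh ((f + f')(e:=0)) ?y)) * chi v) =
        rh (f(e:=0)) + (\<lambda>v. (f e - (rh (f(e:=0)) ?x - rh (f(e:=0)) ?y)) * chi v) +
        (rh (f'(e:=0)) + (\<lambda>v. (f' e - (rh (f'(e:=0)) ?x - rh (f'(e:=0)) ?y)) * chi v))"
        unfolding r1 by (rule ext) (simp add: algebra_simps)
    qed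
  next
    fix f assume f: "f \<in> Zf ?D"
    have f0: "f(e:=0) \<in> Zf D" using upd_Zf[OF f] .
    define c where "c = f e - (rh (f(e:=0)) ?x - rh (f(e:=0)) ?y)"
    have d0: "f(e:=0) = delta D src tgt (rh (f(e:=0))) + sg (T (f(e:=0)))" by (rule bspec[OF dec f0])
    have sT: "sg (T (f(e:=0))) \<in> Zf D" using sZ TZ f0 by blast
    have eq: "f d = (delta ?D src tgt (rh (f(e:=0)) + (\<lambda>v. c * chi v)) + sg (T (f(e:=0)))) d" for d
    proof (cases "d = e")
      case True
      have "sg (T (f(e:=0))) e = 0" using Zf_out[OF sT eD] .
      then show ?thesis using True chix chiy by (simp add: delta_def c_def)
    next
      case False
      show ?thesis
      proof (cases "d \<in> D")
        case True
        have "f d = (f(e:=0)) d" using False by simp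
        also have "\<dots> = delta D src tgt (rh (f(e:=0))) d + sg (T (f(e:=0))) d"
          using fun_cong[OF d0, of d] by (simp only: plus_fun_apply)
        finally show ?thesis using False True chi_edge[OF True] by (simp add: delta_def algebra_simps)
      next
        case nD: False
        have "f d = 0" using f False nD by (simp add: Zf_def)
        moreover have "sg (T (f(e:=0))) d = 0" using Zf_out[OF sT nD] .
        ultimately show ?thesis using False nD by (simp add: delta_def)
      qed
    qed
    show "f = delta ?D src tgt (rh (f(e:=0)) + (\<lambda>v. (f e - (rh (f(e:=0)) ?x - rh (f(e:=0)) ?y)) * chi v)) +
        sg (T (f(e:=0)))"
      unfolding c_def[symmetric] by (rule ext, rule eq)
  next
    fix g
    show "T ((delta ?D src tgt g)(e:=0)) = 0" unfolding delta_insert_restr[OF eD] using Td by blast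
  qed
qed

lemma ginv_base:
  "ginv V {} src tgt {} (\<lambda>f. 0) (\<lambda>h. 0) (\<lambda>f. 0)"
  unfolding ginv_def additive_def by (auto simp: Zf_def delta_def)

lemma graph_main:
  assumes "finite D" "finite V" "\<forall>d\<in>D. src d \<in> V \<and> tgt d \<in> V"
  shows "\<exists>K T sg rh. ginv V D src tgt K T sg rh \<and>
     card K + card V = card D + card (V // ((grel D src tgt)\<^sup>* \<inter> V \<times> V))"
  using assms
proof (induction D rule: finite_induct)
  case empty
  show ?case
    by (intro exI conjI, rule ginv_base, simp add: card_comps_empty[OF empty.prems(1)])
next
  case (insert e D)
  have "\<exists>K T sg rh. ginv V D src tgt K T sg rh \<and>
     card K + card V = card D + card (V // ((grel D src tgt)\<^sup>* \<inter> V \<times> V))"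
    using insert.prems by (intro insert.IH) auto
  then obtain K T sg rh where inv: "ginv V D src tgt K T sg rh"
    and cd: "card K + card V = card D + card (V // ((grel D src tgt)\<^sup>* \<inter> V \<times> V))" by blast
  have KD: "K \<subseteq> D" using ginvD(1)[OF inv] .
  have fK: "finite K" using KD insert.hyps(1) finite_subset by blast
  have eK: "e \<notin> K" using KD insert.hyps(2) by blast
  show ?case
  proof (cases "(src e, tgt e) \<in> (grel D src tgt)\<^sup>*")
    case True
    have "card (insert e K) + card V = card (insert e D) + card (V // ((grel (insert e D) src tgt)\<^sup>* \<inter> V \<times> V))"
      using cd comps_conn[OF True] fK eK insert.hyps by simp
    note c = this
    show ?thesis by (intro exI, rule conjI[OF ginv_step_conn[OF inv insert.hyps(2) True] c])
  next
    case False
    have xV: "src e \<in> V" "tgt e \<in> V" using insert.prems by auto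
    have "card K + card V = card (insert e D) + card (V // ((grel (insert e D) src tgt)\<^sup>* \<inter> V \<times> V))"
      using cd card_comps_disconn[OF insert.prems(1) xV False] insert.hyps by simp
    note c = this
    show ?thesis by (intro exI, rule conjI[OF ginv_step_disconn[OF inv insert.hyps(2) False] c])
  qed
qed



lemma sum_fun_apply: "(\<Sum>i\<in>I. F i) t = (\<Sum>i\<in>I. (F i t :: int))"
proof (induction I rule: infinite_finite_induct)
  case (infinite A) then show ?case by simp
next
  case empty then show ?case by simp
next
  case (insert x F) then show ?case by simp
qed

definition zhom :: "('a, 'b) monoid_scheme \<Rightarrow> ('a \<Rightarrow> 'k \<Rightarrow> int) \<Rightarrow> bool" where
  "zhom G \<phi> \<longleftrightarrow> (\<forall>x\<in>carrier G. \<forall>y\<in>carrier G. \<phi> (x \<otimes>\<^bsub>G\<^esub> y) = \<phi> x + \<phi> y)"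

lemma zhomD: "zhom G \<phi> \<Longrightarrow> x \<in> carrier G \<Longrightarrow> y \<in> carrier G \<Longrightarrow> \<phi> (x \<otimes>\<^bsub>G\<^esub> y) = \<phi> x + \<phi> y"
  by (simp add: zhom_def)

context group begin

lemma zhom_one: assumes "zhom G \<phi>" shows "\<phi> \<one> = 0"
proof -
  have "\<phi> (\<one> \<otimes> \<one>) = \<phi> \<one> + \<phi> \<one>" by (rule zhomD[OF assms one_closed one_closed])
  then have "\<phi> \<one> = \<phi> \<one> + \<phi> \<one>" by simp
  then show ?thesis by (metis add_cancel_right_right)
qed

lemma zhom_inv: assumes "zhom G \<phi>" "x \<in> carrier G" shows "\<phi> (inv x) = - \<phi> x"
proof -
  have "\<phi> (inv x \<otimes> x) = \<phi> (inv x) + \<phi> x" by (rule zhomD[OF assms(1) inv_closed[OF assms(2)] assms(2)])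
  then have "0 = \<phi> (inv x) + \<phi> x" using zhom_one[OF assms(1)] assms(2) by (simp add: l_inv)
  then show ?thesis by (simp add: eq_neg_iff_add_eq_0)
qed

lemma zhom_pow_nat: assumes "zhom G \<phi>" "x \<in> carrier G"
  shows "\<phi> (x [^] (k::nat)) = (\<lambda>t. int k * \<phi> x t)"
proof (induction k)
  case 0 then show ?case using zhom_one[OF assms(1)] by (simp add: fun_eq_iff)
next
  case (Suc k)
  have "\<phi> (x [^] Suc k) = \<phi> (x [^] k \<otimes> x)" by simp
  also have "\<dots> = \<phi> (x [^] k) + \<phi> x" using zhomD[OF assms(1)] assms(2) by simp
  finally show ?case using Suc by (simp add: fun_eq_iff algebra_simps)
qed

lemma zhom_pow: assumes "zhom G \<phi>" "x \<in> carrier G"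
  shows "\<phi> (x [^] (k::int)) = (\<lambda>t. k * \<phi> x t)"
proof (cases k rule: int_cases)
  case (nonneg j)
  then show ?thesis using zhom_pow_nat[OF assms, of j] by (simp add: int_pow_int)
next
  case (neg j)
  have "x [^] k = x [^] (- int (Suc j))" using neg by simp
  also have "\<dots> = inv (x [^] int (Suc j))" by (rule int_pow_neg[OF assms(2)])
  also have "\<dots> = inv (x [^] (Suc j))" by (simp only: int_pow_int)
  finally have "x [^] k = inv (x [^] (Suc j))" .
  then have "\<phi> (x [^] k) = - \<phi> (x [^] (Suc j))" using zhom_inv[OF assms(1)] assms(2) by simp
  also have "\<dots> = (\<lambda>t. k * \<phi> x t)" unfolding zhom_pow_nat[OF assms] by (simp add: fun_eq_iff neg del: of_nat_Suc)
  finally show ?thesis .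
qed

lemma zhom_comp: assumes "h \<in> hom H G" "zhom G \<phi>" shows "zhom H (\<phi> \<circ> h)"
  using assms unfolding zhom_def hom_def by auto

lemma zhom_kills_derived:
  assumes "zhom G \<phi>" "x \<in> derived G (carrier G)" shows "\<phi> x = 0"
proof -
  let ?Kr = "{x \<in> carrier G. \<phi> x = 0}"
  have sg: "subgroup ?Kr G"
  proof
    show "?Kr \<subseteq> carrier G" by auto
    show "\<one> \<in> ?Kr" using zhom_one[OF assms(1)] by auto
    fix x y assume "x \<in> ?Kr" "y \<in> ?Kr"
    then show "x \<otimes> y \<in> ?Kr" using zhomD[OF assms(1)] by auto
  next
    fix x assume "x \<in> ?Kr" then show "inv x \<in> ?Kr" using zhom_inv[OF assms(1)] by auto
  qed
  have "derived_set G (carrier G) \<subseteq> ?Kr"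
  proof
    fix d assume "d \<in> derived_set G (carrier G)"
    then obtain h1 h2 where h: "h1 \<in> carrier G" "h2 \<in> carrier G" "d = h1 \<otimes> h2 \<otimes> inv h1 \<otimes> inv h2" by auto
    have "\<phi> d = \<phi> h1 + \<phi> h2 + \<phi> (inv h1) + \<phi> (inv h2)"
      using h zhomD[OF assms(1)] by simp
    also have "\<dots> = 0" using h zhom_inv[OF assms(1)] by simp
    finally show "d \<in> ?Kr" using h by auto
  qed
  then have "derived G (carrier G) \<subseteq> ?Kr" unfolding derived_def using generate_subgroup_incl[OF _ sg] by blast
  then show ?thesis using assms(2) by auto
qed

lemma zhom_foldr: assumes "zhom G \<phi>" "f ` set l \<subseteq> carrier G"
  shows "\<phi> (foldr (\<otimes>) (map f l) \<one>) = sum_list (map (\<phi> \<circ> f) l)"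
  using assms(2)
proof (induction l)
  case Nil then show ?case using zhom_one[OF assms(1)] by simp
next
  case (Cons a l)
  have fl: "foldr (\<otimes>) (map f l) \<one> \<in> carrier G"
    using Cons.prems by (induction l) auto
  show ?case using Cons zhomD[OF assms(1)] fl by simp
qed

end

lemma hom_foldr:
  assumes "group G" "group H" "h \<in> hom G H" "f ` set l \<subseteq> carrier G"
  shows "h (foldr (\<otimes>\<^bsub>G\<^esub>) (map f l) \<one>\<^bsub>G\<^esub>) = foldr (\<otimes>\<^bsub>H\<^esub>) (map (h \<circ> f) l) \<one>\<^bsub>H\<^esub>"
  using assms(4)
proof (induction l)
  case Nil then show ?case using assms by (simp add: hom_one)
next
  case (Cons a l)
  have fl: "foldr (\<otimes>\<^bsub>G\<^esub>) (map f l) \<one>\<^bsub>G\<^esub> \<in> carrier G"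
    using Cons.prems by (induction l) (auto simp: group.is_monoid[OF assms(1)] monoid.m_closed monoid.one_closed)
  show ?case using Cons assms(3) fl by (simp add: hom_mult)
qed

context comm_group begin

lemma zhom_finprod: assumes "zhom G \<phi>" "f \<in> I \<rightarrow> carrier G" "finite I"
  shows "\<phi> (finprod G f I) = (\<Sum>i\<in>I. \<phi> (f i))"
  using assms(3,2)
proof (induction I rule: finite_induct)
  case empty then show ?case using zhom_one[OF assms(1)] by simp
next
  case (insert x F)
  have "f \<in> F \<rightarrow> carrier G" "f x \<in> carrier G" using insert.prems by auto
  then show ?case using insert zhomD[OF assms(1)] by simp
qed

end



definition ind :: "'k \<Rightarrow> 'k \<Rightarrow> int" where "ind k = (\<lambda>t. if t = k then 1 else 0)"

lemma Zf_eqI: "f \<in> Zf J \<Longrightarrow> g \<in> Zf J \<Longrightarrow> (\<And>j. j \<in> J \<Longrightarrow> f j = g j) \<Longrightarrow> f = g"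
proof (rule ext)
  fix x assume f: "f \<in> Zf J" and g: "g \<in> Zf J" and e: "\<And>j. j \<in> J \<Longrightarrow> f j = g j"
  show "f x = g x"
  proof (cases "x \<in> J")
    case True then show ?thesis using e by simp
  next
    case False then show ?thesis using f g unfolding Zf_def by simp
  qed
qed

lemma sum_ind_apply: "finite K \<Longrightarrow> (\<Sum>k\<in>K. (\<lambda>t. c k * ind k t)) t = (if t \<in> K then c t else 0)"
proof -
  assume fK: "finite K"
  have "(\<Sum>k\<in>K. (\<lambda>t. c k * ind k t)) t = (\<Sum>k\<in>K. c k * ind k t)" by (rule sum_fun_apply)
  also have "\<dots> = (\<Sum>k\<in>K. if t = k then c k else 0)" by (rule sum.cong) (auto simp: ind_def)
  also have "\<dots> = (if t \<in> K then c t else 0)" using fK by (rule sum.delta')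
  finally show ?thesis .
qed

lemma (in comm_monoid) finprod_single:
  assumes "finite J" "j \<in> J" "y \<in> carrier G"
  shows "finprod G (\<lambda>k. if k = j then y else \<one>) J = y"
proof -
  have J: "J = insert j (J - {j})" using assms(2) by blast
  have "finprod G (\<lambda>k. if k = j then y else \<one>) (insert j (J - {j})) =
        (if j = j then y else \<one>) \<otimes> finprod G (\<lambda>k. if k = j then y else \<one>) (J - {j})"
    by (rule finprod_insert) (use assms in auto)
  also have "finprod G (\<lambda>k. if k = j then y else \<one>) (J - {j}) = \<one>"
    by (rule finprod_one_eqI) auto
  finally show ?thesis using J assms(3) by simp
qed

lemma fab_coord:
  assumes fab: "free_abelian_basis H J b"
  shows "\<exists>co. (\<forall>x\<in>carrier H. co x \<in> Zf J) \<and> zhom H co \<and> (\<forall>j\<in>J. co (b j) = ind j) \<and>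
     (\<forall>x\<in>carrier H. co x = 0 \<longrightarrow> x = \<one>\<^bsub>H\<^esub>) \<and> (\<forall>c\<in>Zf J. \<exists>x\<in>carrier H. co x = c)"
proof -
  have cg: "comm_group H" and fJ: "finite J" and bJ: "b \<in> J \<rightarrow> carrier H"
    and bij: "bij_betw (\<lambda>k. finprod H (\<lambda>j. b j [^]\<^bsub>H\<^esub> (k j :: int)) J) (J \<rightarrow>\<^sub>E (UNIV :: int set)) (carrier H)"
    using fab unfolding free_abelian_basis_def by auto
  interpret comm_group H by (rule cg)
  define F where "F = (\<lambda>k. finprod H (\<lambda>j. b j [^]\<^bsub>H\<^esub> (k j :: int)) J)"
  have pc: "(\<lambda>j. b j [^]\<^bsub>H\<^esub> (c j :: int)) \<in> J \<rightarrow> carrier H" for c using bJ by auto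
  have Fcl: "F c \<in> carrier H" for c unfolding F_def using pc by simp
  have Fr: "F c = F (restrict c J)" for c unfolding F_def
    by (rule finprod_cong') (use pc in auto)
  have Fadd: "F (c + d) = F c \<otimes>\<^bsub>H\<^esub> F d" for c d
  proof -
    have "F (c + d) = finprod H (\<lambda>j. b j [^]\<^bsub>H\<^esub> c j \<otimes>\<^bsub>H\<^esub> b j [^]\<^bsub>H\<^esub> d j) J" unfolding F_def
      by (rule finprod_cong') (use bJ in \<open>auto simp: int_pow_mult[OF funcset_mem[OF bJ]]\<close>)
    also have "\<dots> = F c \<otimes>\<^bsub>H\<^esub> F d" unfolding F_def using pc by simp
    finally show ?thesis .
  qed
  have F0: "F 0 = \<one>\<^bsub>H\<^esub>" unfolding F_def by (simp add: finprod_one_eqI)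
  have Finj: "c j = d j" if "F c = F d" "j \<in> J" for c d j
  proof -
    have inj: "inj_on F (J \<rightarrow>\<^sub>E UNIV)" using bij_betw_imp_inj_on[OF bij] unfolding F_def .
    have r1: "restrict c J \<in> J \<rightarrow>\<^sub>E UNIV" and r2: "restrict d J \<in> J \<rightarrow>\<^sub>E UNIV" by auto
    have "F (restrict c J) = F c" by (rule Fr[symmetric])
    also have "\<dots> = F d" by (rule that(1))
    also have "\<dots> = F (restrict d J)" by (rule Fr)
    finally have "restrict c J = restrict d J" by (rule inj_onD[OF inj _ r1 r2])
    from fun_cong[OF this, of j] show ?thesis using that(2) by simp
  qed
  define co where "co = (\<lambda>x. \<lambda>j. if j \<in> J then (inv_into (J \<rightarrow>\<^sub>E UNIV) F x) j else 0)"
  have coZ: "co x \<in> Zf J" for x unfolding co_def Zf_def by auto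
  have coF: "F (co x) = x" if "x \<in> carrier H" for x
  proof -
    have sur: "x \<in> F ` (J \<rightarrow>\<^sub>E UNIV)" using bij that unfolding bij_betw_def F_def by auto
    have inP: "inv_into (J \<rightarrow>\<^sub>E UNIV) F x \<in> J \<rightarrow>\<^sub>E UNIV" by (rule inv_into_into[OF sur])
    have "restrict (co x) J = inv_into (J \<rightarrow>\<^sub>E UNIV) F x"
      using inP unfolding co_def by (auto simp: restrict_def PiE_def extensional_def)
    have "F (co x) = F (restrict (co x) J)" by (rule Fr)
    also have "\<dots> = F (inv_into (J \<rightarrow>\<^sub>E UNIV) F x)" using \<open>restrict (co x) J = _\<close> by simp
    also have "\<dots> = x" by (rule f_inv_into_f[OF sur])
    finally show ?thesis .
  qed
  have eqZ: "c = d" if "c \<in> Zf J" "d \<in> Zf J" "F c = F d" for c d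
    using Zf_eqI[OF that(1,2)] Finj[OF that(3)] by blast
  show ?thesis
  proof (intro exI conjI ballI impI)
    fix x assume "x \<in> carrier H" show "co x \<in> Zf J" by (rule coZ)
  next
    show "zhom H co" unfolding zhom_def
    proof (intro ballI)
      fix x y assume x: "x \<in> carrier H" and y: "y \<in> carrier H"
      have "F (co x + co y) = x \<otimes>\<^bsub>H\<^esub> y" using Fadd coF x y by simp
      also have "\<dots> = F (co (x \<otimes>\<^bsub>H\<^esub> y))" using coF x y by simp
      finally show "co (x \<otimes>\<^bsub>H\<^esub> y) = co x + co y"
        by (intro eqZ[symmetric]) (auto intro: Zf_add coZ)
    qed
  next
    fix j assume j: "j \<in> J"
    have "F (ind j) = finprod H (\<lambda>k. if k = j then b j else \<one>\<^bsub>H\<^esub>) J" unfolding F_def ind_def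
      by (rule finprod_cong') (use bJ j int_pow_1[OF funcset_mem[OF bJ j]] in auto)
    also have "\<dots> = b j" by (rule finprod_single) (use fJ j bJ in auto)
    finally have "F (ind j) = F (co (b j))" using coF[OF funcset_mem[OF bJ j]] by simp
    moreover have "ind j \<in> Zf J" using j unfolding Zf_def ind_def by auto
    ultimately show "co (b j) = ind j" by (intro eqZ[OF coZ]) simp_all
  next
    fix x assume x: "x \<in> carrier H" and "co x = 0"
    then show "x = \<one>\<^bsub>H\<^esub>" using coF[OF x] F0 by simp
  next
    fix c assume c: "c \<in> Zf J"
    show "\<exists>x\<in>carrier H. co x = c"
    proof (rule bexI[of _ "F c"])
      show "co (F c) = c" by (rule eqZ[OF coZ c coF[OF Fcl]])
      show "F c \<in> carrier H" by (rule Fcl)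
    qed
  qed
qed

lemma zhom_desc:
  assumes gA: "group A" and gB: "group B" and h: "\<pi> \<in> hom A B" and su: "\<pi> ` carrier A = carrier B"
    and z: "zhom A \<phi>" and k: "\<forall>x\<in>carrier A. \<pi> x = \<one>\<^bsub>B\<^esub> \<longrightarrow> \<phi> x = 0"
  shows "\<exists>\<Psi>. zhom B \<Psi> \<and> (\<forall>x\<in>carrier A. \<Psi> (\<pi> x) = \<phi> x)"
proof -
  interpret A: group A by (rule gA)
  interpret B: group B by (rule gB)
  interpret hh: group_hom A B \<pi> using gA gB h by (simp add: group_hom_def group_hom_axioms_def)
  define \<Psi> where "\<Psi> = (\<lambda>y. \<phi> (SOME x. x \<in> carrier A \<and> \<pi> x = y))"
  have P: "\<Psi> (\<pi> x) = \<phi> x" if x: "x \<in> carrier A" for x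
  proof -
    define x' where "x' = (SOME x'. x' \<in> carrier A \<and> \<pi> x' = \<pi> x)"
    have x': "x' \<in> carrier A \<and> \<pi> x' = \<pi> x" unfolding x'_def by (rule someI[of _ x]) (use x in auto)
    have "\<pi> (x' \<otimes>\<^bsub>A\<^esub> inv\<^bsub>A\<^esub> x) = \<pi> x' \<otimes>\<^bsub>B\<^esub> inv\<^bsub>B\<^esub> (\<pi> x)"
      using x x' by (simp add: hh.hom_mult hh.hom_inv)
    also have "\<dots> = \<one>\<^bsub>B\<^esub>" using x' x h hom_in_carrier[OF h] by (simp add: B.r_inv)
    finally have "\<phi> (x' \<otimes>\<^bsub>A\<^esub> inv\<^bsub>A\<^esub> x) = 0" using k x x' by auto
    then have "\<phi> x' + - \<phi> x = 0" using zhomD[OF z] A.zhom_inv[OF z] x x' by simp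
    then have "\<phi> x' = \<phi> x" by simp
    then show ?thesis unfolding \<Psi>_def x'_def[symmetric] .
  qed
  have "zhom B \<Psi>" unfolding zhom_def
  proof (intro ballI)
    fix y1 y2 assume y1: "y1 \<in> carrier B" and y2: "y2 \<in> carrier B"
    obtain x1 where x1: "x1 \<in> carrier A" "\<pi> x1 = y1" using y1 unfolding su[symmetric] by blast
    obtain x2 where x2: "x2 \<in> carrier A" "\<pi> x2 = y2" using y2 unfolding su[symmetric] by blast
    have "\<Psi> (y1 \<otimes>\<^bsub>B\<^esub> y2) = \<Psi> (\<pi> (x1 \<otimes>\<^bsub>A\<^esub> x2))" using x1 x2 h by (simp add: hom_mult)
    also have "\<dots> = \<phi> (x1 \<otimes>\<^bsub>A\<^esub> x2)" by (rule P) (use x1 x2 in simp)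
    also have "\<dots> = \<phi> x1 + \<phi> x2" using x1 x2 zhomD[OF z] by simp
    finally show "\<Psi> (y1 \<otimes>\<^bsub>B\<^esub> y2) = \<Psi> y1 + \<Psi> y2" using P[OF x1(1)] P[OF x2(1)] x1(2) x2(2) by simp
  qed
  then show ?thesis using P by blast
qed

lemma fab_from_zhom_img:
  assumes cg: "comm_group Q" and fK: "finite K" and bK: "b \<in> K \<rightarrow> carrier Q" and ib: "inj_on b K"
    and z: "zhom Q \<Psi>" and PZ: "\<forall>x\<in>carrier Q. \<Psi> x \<in> Zf K"
    and Pb: "\<forall>k\<in>K. \<Psi> (b k) = ind k" and Pk: "\<forall>x\<in>carrier Q. \<Psi> x = 0 \<longrightarrow> x = \<one>\<^bsub>Q\<^esub>"
  shows "free_abelian_basis Q (b ` K) id"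
proof -
  interpret comm_group Q by (rule cg)
  define B where "B = b ` K"
  define iv where "iv = inv_into K b"
  have iv: "iv (b k) = k" if "k \<in> K" for k using ib that unfolding iv_def by simp
  define \<Psi>' where "\<Psi>' = (\<lambda>x \<beta>. if \<beta> \<in> B then \<Psi> x (iv \<beta>) else 0)"
  have fB: "finite B" using fK B_def by simp
  have BQ: "id \<in> B \<rightarrow> carrier Q" using bK B_def by auto
  have z': "zhom Q \<Psi>'" unfolding zhom_def \<Psi>'_def using zhomD[OF z] by (auto simp: fun_eq_iff)
  have PZ': "\<Psi>' x \<in> Zf B" for x unfolding \<Psi>'_def Zf_def by auto
  have inj\<Psi>: "x = y" if "x \<in> carrier Q" "y \<in> carrier Q" "\<Psi>' x = \<Psi>' y" for x y
  proof -
    have "\<Psi> x = \<Psi> y"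
    proof (rule Zf_eqI[OF PZ[rule_format, OF that(1)] PZ[rule_format, OF that(2)]])
      fix k assume k: "k \<in> K"
      have "\<Psi>' x (b k) = \<Psi>' y (b k)" using that(3) by simp
      then show "\<Psi> x k = \<Psi> y k" unfolding \<Psi>'_def using k iv B_def by auto
    qed
    then have "\<Psi> (x \<otimes>\<^bsub>Q\<^esub> inv\<^bsub>Q\<^esub> y) = 0" using zhomD[OF z] zhom_inv[OF z] that by simp
    then have "x \<otimes>\<^bsub>Q\<^esub> inv\<^bsub>Q\<^esub> y = \<one>\<^bsub>Q\<^esub>" using Pk that by auto
    have "x = x \<otimes>\<^bsub>Q\<^esub> (inv\<^bsub>Q\<^esub> y \<otimes>\<^bsub>Q\<^esub> y)" using that by simp
    also have "\<dots> = (x \<otimes>\<^bsub>Q\<^esub> inv\<^bsub>Q\<^esub> y) \<otimes>\<^bsub>Q\<^esub> y" using that by (simp add: m_assoc)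
    also have "\<dots> = y" using that \<open>x \<otimes>\<^bsub>Q\<^esub> inv\<^bsub>Q\<^esub> y = \<one>\<^bsub>Q\<^esub>\<close> by simp
    finally show ?thesis .
  qed
  define F where "F = (\<lambda>c. finprod Q (\<lambda>\<beta>. id \<beta> [^]\<^bsub>Q\<^esub> (c \<beta> :: int)) B)"
  have pc: "(\<lambda>\<beta>. id \<beta> [^]\<^bsub>Q\<^esub> (c \<beta> :: int)) \<in> B \<rightarrow> carrier Q" for c using BQ by (auto simp: Pi_iff)
  have Pb': "\<Psi>' (id \<beta>) = ind \<beta>" if bB: "\<beta> \<in> B" for \<beta>
  proof -
    obtain k where k: "k \<in> K" "\<beta> = b k" using bB B_def by auto
    show ?thesis unfolding \<Psi>'_def using k Pb iv B_def by (auto simp: fun_eq_iff ind_def)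
  qed
  have PF: "\<Psi>' (F c) = (\<lambda>t. if t \<in> B then c t else 0)" for c
  proof -
    have "\<Psi>' (F c) = (\<Sum>\<beta>\<in>B. \<Psi>' (id \<beta> [^]\<^bsub>Q\<^esub> c \<beta>))" unfolding F_def by (rule zhom_finprod[OF z' pc fB])
    also have "\<dots> = (\<Sum>\<beta>\<in>B. (\<lambda>t. c \<beta> * ind \<beta> t))"
      by (rule sum.cong) (use zhom_pow[OF z'] BQ Pb' in \<open>auto simp: Pi_iff\<close>)
    finally show ?thesis using sum_ind_apply[OF fB] by (simp add: fun_eq_iff)
  qed
  have Fcl: "F c \<in> carrier Q" for c unfolding F_def using pc by simp
  have "bij_betw F (B \<rightarrow>\<^sub>E UNIV) (carrier Q)"
    unfolding bij_betw_def
  proof (intro conjI)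
    show "inj_on F (B \<rightarrow>\<^sub>E UNIV)"
    proof (rule inj_onI)
      fix c d assume c: "c \<in> B \<rightarrow>\<^sub>E UNIV" and d: "d \<in> B \<rightarrow>\<^sub>E UNIV" and e: "F c = F d"
      have "(\<lambda>t. if t \<in> B then c t else (0::int)) = \<Psi>' (F c)" by (rule PF[symmetric])
      also have "\<dots> = \<Psi>' (F d)" using e by simp
      also have "\<dots> = (\<lambda>t. if t \<in> B then d t else 0)" by (rule PF)
      finally have eq: "(\<lambda>t. if t \<in> B then c t else (0::int)) = (\<lambda>t. if t \<in> B then d t else 0)" .
      have "\<forall>t\<in>B. c t = d t"
      proof
        fix t assume t: "t \<in> B"
        from fun_cong[OF eq, of t] show "c t = d t" using t by simp
      qed
      then show "c = d" using c d by (intro PiE_ext) auto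
    qed
    show "F ` (B \<rightarrow>\<^sub>E UNIV) = carrier Q"
    proof
      show "F ` (B \<rightarrow>\<^sub>E UNIV) \<subseteq> carrier Q" using Fcl by auto
      show "carrier Q \<subseteq> F ` (B \<rightarrow>\<^sub>E UNIV)"
      proof
        fix x assume x: "x \<in> carrier Q"
        define c where "c = restrict (\<Psi>' x) B"
        have "\<Psi>' (F c) = \<Psi>' x" unfolding PF using PZ'[of x] unfolding c_def Zf_def by auto
        then have "F c = x" using inj\<Psi> Fcl x by blast
        moreover have "c \<in> B \<rightarrow>\<^sub>E UNIV" unfolding c_def by simp
        ultimately show "x \<in> F ` (B \<rightarrow>\<^sub>E UNIV)" by blast
      qed
    qed
  qed
  then show ?thesis unfolding free_abelian_basis_def B_def[symmetric] F_def
    using cg fB BQ by auto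
qed



lemma normal_closure_normal:
  assumes gG: "group G" and Y: "Y \<subseteq> carrier G"
  shows "normal_closure G Y \<lhd> G" "Y \<subseteq> normal_closure G Y"
proof -
  interpret group G by (rule gG)
  let ?C = "{g \<otimes>\<^bsub>G\<^esub> x \<otimes>\<^bsub>G\<^esub> inv\<^bsub>G\<^esub> g | g x. g \<in> carrier G \<and> x \<in> Y}"
  have C: "?C \<subseteq> carrier G" using Y by auto
  show "normal_closure G Y \<lhd> G" unfolding normal_closure_def
  proof (rule normal_generateI[OF C])
    fix h g assume h: "h \<in> ?C" and g: "g \<in> carrier G"
    then obtain g' x where gx: "g' \<in> carrier G" "x \<in> Y" "h = g' \<otimes>\<^bsub>G\<^esub> x \<otimes>\<^bsub>G\<^esub> inv\<^bsub>G\<^esub> g'" by auto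
    have xc: "x \<in> carrier G" using gx Y by auto
    have "g \<otimes>\<^bsub>G\<^esub> h \<otimes>\<^bsub>G\<^esub> inv\<^bsub>G\<^esub> g = (g \<otimes>\<^bsub>G\<^esub> g') \<otimes>\<^bsub>G\<^esub> x \<otimes>\<^bsub>G\<^esub> inv\<^bsub>G\<^esub> (g \<otimes>\<^bsub>G\<^esub> g')"
      using gx g xc by (simp add: m_assoc inv_mult_group)
    then show "g \<otimes>\<^bsub>G\<^esub> h \<otimes>\<^bsub>G\<^esub> inv\<^bsub>G\<^esub> g \<in> ?C" using gx g by blast
  qed
  show "Y \<subseteq> normal_closure G Y" unfolding normal_closure_def
  proof
    fix y assume y: "y \<in> Y"
    then have "y = \<one>\<^bsub>G\<^esub> \<otimes>\<^bsub>G\<^esub> y \<otimes>\<^bsub>G\<^esub> inv\<^bsub>G\<^esub> \<one>\<^bsub>G\<^esub>" using Y by auto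
    then have "y \<in> ?C" using y by blast
    then show "y \<in> generate G ?C" by (rule generate.incl)
  qed
qed

lemma hom_kills_derived:
  assumes gG: "group G" and cH: "comm_group H" and h: "\<tau> \<in> hom G H"
    and d: "d \<in> derived G (carrier G)"
  shows "\<tau> d = \<one>\<^bsub>H\<^esub>"
proof -
  interpret G: group G by (rule gG)
  interpret H: comm_group H by (rule cH)
  interpret gh: group_hom G H \<tau> using gG H.is_group h by (simp add: group_hom_def group_hom_axioms_def)
  have "derived_set G (carrier G) \<subseteq> kernel G H \<tau>"
  proof
    fix x assume "x \<in> derived_set G (carrier G)"
    then obtain h1 h2 where hh: "h1 \<in> carrier G" "h2 \<in> carrier G"
      "x = h1 \<otimes>\<^bsub>G\<^esub> h2 \<otimes>\<^bsub>G\<^esub> inv\<^bsub>G\<^esub> h1 \<otimes>\<^bsub>G\<^esub> inv\<^bsub>G\<^esub> h2" by auto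
    have c: "\<tau> h1 \<in> carrier H" "\<tau> h2 \<in> carrier H" using hh by simp_all
    have "\<tau> x = \<tau> h1 \<otimes>\<^bsub>H\<^esub> \<tau> h2 \<otimes>\<^bsub>H\<^esub> inv\<^bsub>H\<^esub> (\<tau> h1) \<otimes>\<^bsub>H\<^esub> inv\<^bsub>H\<^esub> (\<tau> h2)"
      using hh by simp
    also have "\<dots> = (\<tau> h1 \<otimes>\<^bsub>H\<^esub> \<tau> h2) \<otimes>\<^bsub>H\<^esub> (inv\<^bsub>H\<^esub> (\<tau> h1) \<otimes>\<^bsub>H\<^esub> inv\<^bsub>H\<^esub> (\<tau> h2))"
      using c by (simp add: H.m_assoc)
    also have "\<dots> = (\<tau> h1 \<otimes>\<^bsub>H\<^esub> \<tau> h2) \<otimes>\<^bsub>H\<^esub> inv\<^bsub>H\<^esub> (\<tau> h1 \<otimes>\<^bsub>H\<^esub> \<tau> h2)"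
      using c by (simp add: H.inv_mult)
    also have "\<dots> = \<one>\<^bsub>H\<^esub>" using c by simp
    finally show "x \<in> kernel G H \<tau>" using hh by (simp add: kernel_def)
  qed
  then have "derived G (carrier G) \<subseteq> kernel G H \<tau>"
    unfolding derived_def by (rule G.generate_subgroup_incl[OF _ gh.subgroup_kernel])
  then show ?thesis using d by (auto simp: kernel_def)
qed

locale setting =
  fixes G :: "('g, 'x) monoid_scheme" and a :: "nat \<Rightarrow> 'g"
    and n m :: nat and S :: "nat \<Rightarrow> nat set"
  assumes grp: "group G"
    and gens: "a \<in> {1..n} \<rightarrow> carrier G"
    and generates: "generate G (a ` {1..n}) = carrier G"
    and central: "\<forall>g\<in>carrier G. prod_gens G a n \<otimes>\<^bsub>G\<^esub> g = g \<otimes>\<^bsub>G\<^esub> prod_gens G a n"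
    and S_sub: "\<forall>i\<in>{1..m}. S i \<subseteq> {1..n}"
    and A_ab: "free_abelian_basis (abelianization (Aprod G a n m S)) (Sigma {1..m} S)
                 (\<lambda>ij. derived (Aprod G a n m S) (carrier (Aprod G a n m S))
                         #>\<^bsub>Aprod G a n m S\<^esub> aA G a n m S ij)"
begin

abbreviation "GSi i \<equiv> GS G a n (S i)"
abbreviation "Ni i \<equiv> kerS G a n (S i)"
abbreviation "zi i \<equiv> zS G a n (S i)"
abbreviation "Zi i \<equiv> generate (GSi i) {zi i}"
abbreviation "AA \<equiv> Aprod G a n m S"
abbreviation "AB \<equiv> Abar G a n m S"
abbreviation "zz \<equiv> prod_gens G a n"
abbreviation "Dg \<equiv> Sigma {1..m} S"

lemma aC: "j \<in> {1..n} \<Longrightarrow> a j \<in> carrier G" using gens by auto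

lemma zz_foldr: "zz = foldr (\<otimes>\<^bsub>G\<^esub>) (map a [1..<Suc n]) \<one>\<^bsub>G\<^esub>" by (simp add: prod_gens_def)

lemma zzC: "zz \<in> carrier G"
proof -
  interpret group G by (rule grp)
  have fc: "foldr (\<otimes>\<^bsub>G\<^esub>) (map a l) \<one>\<^bsub>G\<^esub> \<in> carrier G" if "\<forall>j\<in>set l. a j \<in> carrier G" for l
    using that by (induction l) auto
  have "\<forall>j\<in>set [1..<Suc n]. a j \<in> carrier G" using aC by auto
  then show ?thesis unfolding zz_foldr by (rule fc)
qed

lemma Ni_normal: "Ni i \<lhd> G" and Ni_sub: "a ` ({1..n} - S i) \<subseteq> Ni i"
proof -
  have "a ` ({1..n} - S i) \<subseteq> carrier G" using aC by auto
  then show "Ni i \<lhd> G" "a ` ({1..n} - S i) \<subseteq> Ni i"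
    unfolding kerS_def using normal_closure_normal[OF grp] by auto
qed

lemma GSi_group: "group (GSi i)"
  unfolding GS_def using normal.factorgroup_is_group[OF Ni_normal] .

lemma cos_hom: "(\<lambda>g. Ni i #>\<^bsub>G\<^esub> g) \<in> hom G (GSi i)"
  unfolding GS_def using normal.r_coset_hom_Mod[OF Ni_normal] .

lemma GSi_carrier: "carrier (GSi i) = (\<lambda>g. Ni i #>\<^bsub>G\<^esub> g) ` carrier G"
  unfolding GS_def by (rule carrier_FactGroup)

lemma GSi_one: "\<one>\<^bsub>GSi i\<^esub> = Ni i" unfolding GS_def by simp

lemma aS_cos: "aS G a n (S i) j = Ni i #>\<^bsub>G\<^esub> a j" by (simp add: aS_def)

lemma aS_one: assumes "j \<in> {1..n}" "j \<notin> S i" shows "aS G a n (S i) j = \<one>\<^bsub>GSi i\<^esub>"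
proof -
  interpret group G by (rule grp)
  have "a j \<in> Ni i" using Ni_sub[of i] assms by blast
  then show ?thesis unfolding aS_cos GSi_one
    using coset_join2[OF aC[OF assms(1)] normal.axioms(1)[OF Ni_normal]] by simp
qed

lemma aS_C: "j \<in> {1..n} \<Longrightarrow> aS G a n (S i) j \<in> carrier (GSi i)"
  unfolding aS_cos GSi_carrier using aC by auto

lemma zi_cos: "zi i = Ni i #>\<^bsub>G\<^esub> zz"
proof -
  have s: "a ` set [1..<Suc n] \<subseteq> carrier G" using aC by auto
  have "zi i = foldr (\<otimes>\<^bsub>GSi i\<^esub>) (map (aS G a n (S i)) [1..<Suc n]) \<one>\<^bsub>GSi i\<^esub>"
    by (simp add: zS_def prod_gens_def)
  also have "map (aS G a n (S i)) [1..<Suc n] = map ((\<lambda>g. Ni i #>\<^bsub>G\<^esub> g) \<circ> a) [1..<Suc n]"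
    by (simp add: aS_cos comp_def)
  also have "foldr (\<otimes>\<^bsub>GSi i\<^esub>) (map ((\<lambda>g. Ni i #>\<^bsub>G\<^esub> g) \<circ> a) [1..<Suc n]) \<one>\<^bsub>GSi i\<^esub> = Ni i #>\<^bsub>G\<^esub> zz"
    unfolding zz_foldr by (rule hom_foldr[OF grp GSi_group cos_hom s, symmetric])
  finally show ?thesis .
qed

lemma zi_C: "zi i \<in> carrier (GSi i)" unfolding zi_cos GSi_carrier using zzC by auto

lemma zi_central: assumes "y \<in> carrier (GSi i)"
  shows "zi i \<otimes>\<^bsub>GSi i\<^esub> y = y \<otimes>\<^bsub>GSi i\<^esub> zi i"
proof -
  obtain x where x: "x \<in> carrier G" "y = Ni i #>\<^bsub>G\<^esub> x" using assms GSi_carrier by auto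
  have "zi i \<otimes>\<^bsub>GSi i\<^esub> y = Ni i #>\<^bsub>G\<^esub> (zz \<otimes>\<^bsub>G\<^esub> x)"
    unfolding zi_cos x(2) using hom_mult[OF cos_hom zzC x(1)] by simp
  also have "\<dots> = Ni i #>\<^bsub>G\<^esub> (x \<otimes>\<^bsub>G\<^esub> zz)" using central x(1) by simp
  also have "\<dots> = y \<otimes>\<^bsub>GSi i\<^esub> zi i"
    unfolding zi_cos x(2) using hom_mult[OF cos_hom x(1) zzC] by simp
  finally show ?thesis .
qed

lemma Zi_normal: "Zi i \<lhd> GSi i"
proof -
  interpret GS: group "GSi i" by (rule GSi_group)
  show ?thesis
  proof (rule GS.normal_generateI)
    show "{zi i} \<subseteq> carrier (GSi i)" using zi_C by auto
    fix h g assume h: "h \<in> {zi i}" and g: "g \<in> carrier (GSi i)"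
    have "g \<otimes>\<^bsub>GSi i\<^esub> zi i \<otimes>\<^bsub>GSi i\<^esub> inv\<^bsub>GSi i\<^esub> g = zi i \<otimes>\<^bsub>GSi i\<^esub> g \<otimes>\<^bsub>GSi i\<^esub> inv\<^bsub>GSi i\<^esub> g"
      using zi_central[OF g] by simp
    also have "\<dots> = zi i" using g zi_C by (simp add: GS.m_assoc)
    finally show "g \<otimes>\<^bsub>GSi i\<^esub> h \<otimes>\<^bsub>GSi i\<^esub> inv\<^bsub>GSi i\<^esub> g \<in> {zi i}" using h by simp
  qed
qed

lemma GbarS_group: "group (GbarS G a n (S i))"
  unfolding GbarS_def using normal.factorgroup_is_group[OF Zi_normal] .

lemma AA_group: "group AA"
  unfolding Aprod_def by (rule product_group) (rule GSi_group)

lemma AB_group: "group AB"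
  unfolding Abar_def by (rule product_group) (rule GbarS_group)

end



context setting begin

definition slot :: "nat \<Rightarrow> 'g set \<Rightarrow> nat \<Rightarrow> 'g set" where
  "slot i g = (\<lambda>i'\<in>{1..m}. if i' = i then g else \<one>\<^bsub>GSi i'\<^esub>)"

definition piA :: "(nat \<Rightarrow> 'g set) \<Rightarrow> nat \<Rightarrow> 'g set set" where
  "piA x = (\<lambda>i\<in>{1..m}. Zi i #>\<^bsub>GSi i\<^esub> x i)"

definition rhoG :: "'g \<Rightarrow> nat \<Rightarrow> 'g set" where
  "rhoG g = (\<lambda>i\<in>{1..m}. Ni i #>\<^bsub>G\<^esub> g)"

lemma AA_carrier: "carrier AA = (\<Pi>\<^sub>E i\<in>{1..m}. carrier (GSi i))"
  by (simp add: Aprod_def)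
lemma AA_mult: "x \<otimes>\<^bsub>AA\<^esub> y = (\<lambda>i\<in>{1..m}. x i \<otimes>\<^bsub>GSi i\<^esub> y i)"
  by (simp add: Aprod_def)
lemma AA_one: "\<one>\<^bsub>AA\<^esub> = (\<lambda>i\<in>{1..m}. \<one>\<^bsub>GSi i\<^esub>)"
  by (simp add: Aprod_def)
lemma AB_carrier: "carrier AB = (\<Pi>\<^sub>E i\<in>{1..m}. carrier (GbarS G a n (S i)))"
  by (simp add: Abar_def)
lemma AB_mult: "x \<otimes>\<^bsub>AB\<^esub> y = (\<lambda>i\<in>{1..m}. x i \<otimes>\<^bsub>GbarS G a n (S i)\<^esub> y i)"
  by (simp add: Abar_def)
lemma AB_one: "\<one>\<^bsub>AB\<^esub> = (\<lambda>i\<in>{1..m}. \<one>\<^bsub>GbarS G a n (S i)\<^esub>)"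
  by (simp add: Abar_def)

lemma GbarS_carrier: "carrier (GbarS G a n (S i)) = (\<lambda>g. Zi i #>\<^bsub>GSi i\<^esub> g) ` carrier (GSi i)"
  unfolding GbarS_def by (rule carrier_FactGroup)

lemma GbarS_one: "\<one>\<^bsub>GbarS G a n (S i)\<^esub> = Zi i" unfolding GbarS_def by simp

lemma cosZ_hom: "(\<lambda>g. Zi i #>\<^bsub>GSi i\<^esub> g) \<in> hom (GSi i) (GbarS G a n (S i))"
  unfolding GbarS_def using normal.r_coset_hom_Mod[OF Zi_normal] .

lemma slot_C: assumes "g \<in> carrier (GSi i)" shows "slot i g \<in> carrier AA"
  unfolding AA_carrier slot_def using assms group.is_monoid[OF GSi_group] by (auto simp: monoid.one_closed)

lemma slot_hom: "slot i \<in> hom (GSi i) AA"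
proof (rule homI)
  fix g assume "g \<in> carrier (GSi i)" then show "slot i g \<in> carrier AA" by (rule slot_C)
next
  fix g h assume g: "g \<in> carrier (GSi i)" and h: "h \<in> carrier (GSi i)"
  show "slot i (g \<otimes>\<^bsub>GSi i\<^esub> h) = slot i g \<otimes>\<^bsub>AA\<^esub> slot i h"
    unfolding AA_mult slot_def using group.is_monoid[OF GSi_group]
    by (intro restrict_ext) (auto simp: monoid.l_one monoid.one_closed)
qed

lemma slot_one: "slot i \<one>\<^bsub>GSi i\<^esub> = \<one>\<^bsub>AA\<^esub>"
  unfolding slot_def AA_one by (intro restrict_ext) auto

lemma aA_slot: "aA G a n m S (i, j) = slot i (aS G a n (S i) j)"
  unfolding aA_def slot_def by (intro restrict_ext) auto

lemma aA_C: "j \<in> {1..n} \<Longrightarrow> aA G a n m S (i, j) \<in> carrier AA"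
  unfolding aA_slot by (rule slot_C[OF aS_C])

lemma piA_hom: "piA \<in> hom AA AB"
proof (rule homI)
  fix x assume x: "x \<in> carrier AA"
  show "piA x \<in> carrier AB" unfolding piA_def AB_carrier GbarS_carrier
    using x AA_carrier by auto
next
  fix x y assume x: "x \<in> carrier AA" and y: "y \<in> carrier AA"
  show "piA (x \<otimes>\<^bsub>AA\<^esub> y) = piA x \<otimes>\<^bsub>AB\<^esub> piA y"
    unfolding piA_def AA_mult AB_mult
  proof (intro restrict_ext)
    fix i assume i: "i \<in> {1..m}"
    have xi: "x i \<in> carrier (GSi i)" and yi: "y i \<in> carrier (GSi i)" using x y i AA_carrier by auto
    show "Zi i #>\<^bsub>GSi i\<^esub> (\<lambda>i\<in>{1..m}. x i \<otimes>\<^bsub>GSi i\<^esub> y i) i =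
        (\<lambda>i\<in>{1..m}. Zi i #>\<^bsub>GSi i\<^esub> x i) i \<otimes>\<^bsub>GbarS G a n (S i)\<^esub> (\<lambda>i\<in>{1..m}. Zi i #>\<^bsub>GSi i\<^esub> y i) i"
      using i hom_mult[OF cosZ_hom xi yi] by simp
  qed
qed

lemma piA_surj: "piA ` carrier AA = carrier AB"
proof
  show "piA ` carrier AA \<subseteq> carrier AB" using piA_hom by (auto simp: hom_def)
  show "carrier AB \<subseteq> piA ` carrier AA"
  proof
    fix y assume y: "y \<in> carrier AB"
    define x where "x = (\<lambda>i\<in>{1..m}. SOME g. g \<in> carrier (GSi i) \<and> y i = Zi i #>\<^bsub>GSi i\<^esub> g)"
    have ex: "\<exists>g. g \<in> carrier (GSi i) \<and> y i = Zi i #>\<^bsub>GSi i\<^esub> g" if "i \<in> {1..m}" for i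
      using y that unfolding AB_carrier GbarS_carrier by auto
    have xi: "x i \<in> carrier (GSi i) \<and> y i = Zi i #>\<^bsub>GSi i\<^esub> x i" if "i \<in> {1..m}" for i
      unfolding x_def using someI_ex[OF ex[OF that]] that by simp
    have "x \<in> carrier AA" unfolding AA_carrier using xi by (auto simp: x_def)
    moreover have "piA x = y"
    proof -
      have "piA x = (\<lambda>i\<in>{1..m}. y i)" unfolding piA_def using xi by (intro restrict_ext) auto
      also have "\<dots> = y" using y unfolding AB_carrier by (simp add: restrict_def PiE_def extensional_def fun_eq_iff)
      finally show ?thesis .
    qed
    ultimately show "y \<in> piA ` carrier AA" by blast
  qed
qed

lemma piA_one_iff: assumes x: "x \<in> carrier AA"
  shows "piA x = \<one>\<^bsub>AB\<^esub> \<longleftrightarrow> (\<forall>i\<in>{1..m}. x i \<in> Zi i)"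
proof -
  have e: "Zi i #>\<^bsub>GSi i\<^esub> x i = Zi i \<longleftrightarrow> x i \<in> Zi i" if i: "i \<in> {1..m}" for i
  proof -
    interpret GS: group "GSi i" by (rule GSi_group)
    have sg: "subgroup (Zi i) (GSi i)" using Zi_normal by (simp add: normal_def)
    have xi: "x i \<in> carrier (GSi i)" using x i AA_carrier by auto
    show ?thesis
    proof
      assume "Zi i #>\<^bsub>GSi i\<^esub> x i = Zi i"
      then show "x i \<in> Zi i" using GS.rcos_self[OF xi sg] by simp
    next
      assume "x i \<in> Zi i"
      then show "Zi i #>\<^bsub>GSi i\<^esub> x i = Zi i" using GS.coset_join2[OF xi sg] by simp
    qed
  qed
  show ?thesis unfolding piA_def AB_one GbarS_one
  proof
    assume h: "(\<lambda>i\<in>{1..m}. Zi i #>\<^bsub>GSi i\<^esub> x i) = (\<lambda>i\<in>{1..m}. Zi i)"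
    show "\<forall>i\<in>{1..m}. x i \<in> Zi i"
    proof
      fix i assume i: "i \<in> {1..m}"
      from fun_cong[OF h, of i] i have "Zi i #>\<^bsub>GSi i\<^esub> x i = Zi i" by simp
      then show "x i \<in> Zi i" using e[OF i] by simp
    qed
  next
    assume "\<forall>i\<in>{1..m}. x i \<in> Zi i"
    then show "(\<lambda>i\<in>{1..m}. Zi i #>\<^bsub>GSi i\<^esub> x i) = (\<lambda>i\<in>{1..m}. Zi i)"
      using e by (intro restrict_ext) auto
  qed
qed

lemma rhoG_hom: "rhoG \<in> hom G AA"
proof (rule homI)
  fix g assume g: "g \<in> carrier G"
  show "rhoG g \<in> carrier AA" unfolding rhoG_def AA_carrier GSi_carrier using g by auto
next
  fix g h assume g: "g \<in> carrier G" and h: "h \<in> carrier G"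
  show "rhoG (g \<otimes>\<^bsub>G\<^esub> h) = rhoG g \<otimes>\<^bsub>AA\<^esub> rhoG h"
    unfolding rhoG_def AA_mult using hom_mult[OF cos_hom g h] by (intro restrict_ext) simp
qed

lemma rhoG_zz: "piA (rhoG zz) = \<one>\<^bsub>AB\<^esub>"
proof -
  have c: "rhoG zz \<in> carrier AA" using hom_in_carrier[OF rhoG_hom zzC] .
  have "\<forall>i\<in>{1..m}. rhoG zz i \<in> Zi i"
    unfolding rhoG_def zi_cos[symmetric] by (auto intro: generate.incl)
  then show ?thesis using piA_one_iff[OF c] by simp
qed

end



lemma sum_delta_fun:
  assumes "finite I"
  shows "(\<Sum>i\<in>I. (\<lambda>t. if f t = i then c i t else (0::int))) p = (if f p \<in> I then c (f p) p else 0)"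
proof -
  have "(\<Sum>i\<in>I. (\<lambda>t. if f t = i then c i t else (0::int))) p = (\<Sum>i\<in>I. if f p = i then c i p else 0)"
    by (rule sum_fun_apply)
  also have "\<dots> = (if f p \<in> I then c (f p) p else 0)" using assms by (rule sum.delta')
  finally show ?thesis .
qed

context setting begin

abbreviation "HA \<equiv> abelianization AA"
abbreviation "dA \<equiv> derived AA (carrier AA)"

definition coA where
  "coA = (SOME co. (\<forall>x\<in>carrier HA. co x \<in> Zf Dg) \<and> zhom HA co \<and>
     (\<forall>j\<in>Dg. co (dA #>\<^bsub>AA\<^esub> aA G a n m S j) = ind j) \<and>
     (\<forall>x\<in>carrier HA. co x = 0 \<longrightarrow> x = \<one>\<^bsub>HA\<^esub>) \<and> (\<forall>c\<in>Zf Dg. \<exists>x\<in>carrier HA. co x = c))"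

lemma coA: "(\<forall>x\<in>carrier HA. coA x \<in> Zf Dg) \<and> zhom HA coA \<and>
     (\<forall>j\<in>Dg. coA (dA #>\<^bsub>AA\<^esub> aA G a n m S j) = ind j) \<and>
     (\<forall>x\<in>carrier HA. coA x = 0 \<longrightarrow> x = \<one>\<^bsub>HA\<^esub>) \<and> (\<forall>c\<in>Zf Dg. \<exists>x\<in>carrier HA. coA x = c)"
  unfolding coA_def by (rule someI_ex[OF fab_coord[OF A_ab]])

definition epsA where "epsA x = coA (dA #>\<^bsub>AA\<^esub> x)"

lemma dA_normal: "dA \<lhd> AA" using group.derived_self_is_normal[OF AA_group] .

lemma cosA_hom: "(\<lambda>x. dA #>\<^bsub>AA\<^esub> x) \<in> hom AA HA"
  unfolding abelianization_def using normal.r_coset_hom_Mod[OF dA_normal] .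

lemma HA_carrier: "carrier HA = (\<lambda>x. dA #>\<^bsub>AA\<^esub> x) ` carrier AA"
  unfolding abelianization_def by (rule carrier_FactGroup)

lemma epsA_Zf: "x \<in> carrier AA \<Longrightarrow> epsA x \<in> Zf Dg"
  unfolding epsA_def using coA HA_carrier by auto

lemma HA_group: "group HA" unfolding abelianization_def by (rule group.derived_quot_is_group[OF AA_group])

lemma epsA_zhom: "zhom AA epsA"
proof -
  have "zhom AA (coA \<circ> (\<lambda>x. dA #>\<^bsub>AA\<^esub> x))"
    using group.zhom_comp[OF HA_group cosA_hom] coA by blast
  then show ?thesis unfolding epsA_def comp_def .
qed

lemma epsA_aA: "p \<in> Dg \<Longrightarrow> epsA (aA G a n m S p) = ind p"
  unfolding epsA_def using coA by blast

lemma epsA_zero: assumes x: "x \<in> carrier AA" and e: "epsA x = 0" shows "x \<in> dA"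
proof -
  have c: "dA #>\<^bsub>AA\<^esub> x \<in> carrier HA" using HA_carrier x by auto
  then have "dA #>\<^bsub>AA\<^esub> x = \<one>\<^bsub>HA\<^esub>" using coA e unfolding epsA_def by blast
  then have "dA #>\<^bsub>AA\<^esub> x = dA" unfolding abelianization_def by simp
  moreover have "x \<in> dA #>\<^bsub>AA\<^esub> x"
    using group.rcos_self[OF AA_group x] dA_normal by (simp add: normal_def)
  ultimately show ?thesis by simp
qed

lemma epsA_surj: assumes "c \<in> Zf Dg" shows "\<exists>x\<in>carrier AA. epsA x = c"
proof -
  obtain y where y: "y \<in> carrier HA" "coA y = c" using coA assms by blast
  then obtain x where "x \<in> carrier AA" "y = dA #>\<^bsub>AA\<^esub> x" using HA_carrier by auto
  then show ?thesis using y unfolding epsA_def by blast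
qed

lemma epsA_one: "epsA \<one>\<^bsub>AA\<^esub> = 0" using group.zhom_one[OF AA_group epsA_zhom] .

definition colV :: "(nat \<Rightarrow> int) \<Rightarrow> nat \<times> nat \<Rightarrow> int" where
  "colV \<beta> = (\<lambda>p. if p \<in> Dg then \<beta> (fst p) else 0)"
definition colU :: "(nat \<Rightarrow> int) \<Rightarrow> nat \<times> nat \<Rightarrow> int" where
  "colU \<alpha> = (\<lambda>p. if p \<in> Dg then \<alpha> (snd p) else 0)"

lemma eps_dec:
  assumes x: "x \<in> carrier AA"
  shows "finite I \<Longrightarrow> I \<subseteq> {1..m} \<Longrightarrow> epsA (\<lambda>i\<in>{1..m}. if i \<in> I then x i else \<one>\<^bsub>GSi i\<^esub>) = (\<Sum>i\<in>I. epsA (slot i (x i)))"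
proof (induction I rule: finite_induct)
  case empty
  have "(\<lambda>i\<in>{1..m}. if i \<in> {} then x i else \<one>\<^bsub>GSi i\<^esub>) = \<one>\<^bsub>AA\<^esub>" unfolding AA_one by simp
  then show ?case using epsA_one by simp
next
  case (insert k F)
  have k: "k \<in> {1..m}" using insert.prems by auto
  have xi: "x i \<in> carrier (GSi i)" if "i \<in> {1..m}" for i using x that AA_carrier by auto
  let ?tF = "(\<lambda>i\<in>{1..m}. if i \<in> F then x i else \<one>\<^bsub>GSi i\<^esub>)"
  have tF: "?tF \<in> carrier AA" unfolding AA_carrier using xi group.is_monoid[OF GSi_group]
    by (auto simp: monoid.one_closed)
  have eq: "(\<lambda>i\<in>{1..m}. if i \<in> insert k F then x i else \<one>\<^bsub>GSi i\<^esub>) = slot k (x k) \<otimes>\<^bsub>AA\<^esub> ?tF"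
    unfolding AA_mult slot_def
  proof (intro restrict_ext)
    fix i assume i: "i \<in> {1..m}"
    interpret GS: group "GSi i" by (rule GSi_group)
    show "(if i \<in> insert k F then x i else \<one>\<^bsub>GSi i\<^esub>) =
       (\<lambda>i'\<in>{1..m}. if i' = k then x k else \<one>\<^bsub>GSi i'\<^esub>) i \<otimes>\<^bsub>GSi i\<^esub> ?tF i"
    proof (cases "i = k")
      case True
      have "x k \<otimes>\<^bsub>GSi k\<^esub> \<one>\<^bsub>GSi k\<^esub> = x k" by (rule monoid.r_one[OF group.is_monoid[OF GSi_group] xi[OF k]])
      then show ?thesis using True i insert.hyps(2) by simp
    next
      case False
      show ?thesis using False i xi[OF i] by (simp add: GS.l_one)
    qed
  qed
  have sk: "slot k (x k) \<in> carrier AA" by (rule slot_C[OF xi[OF k]])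
  have IH: "epsA ?tF = (\<Sum>i\<in>F. epsA (slot i (x i)))" by (rule insert.IH) (use insert.prems in auto)
  show ?case unfolding eq zhomD[OF epsA_zhom sk tF] IH by (simp only: sum.insert[OF insert.hyps])
qed

lemma restrict_AA: "x \<in> carrier AA \<Longrightarrow> (\<lambda>i\<in>{1..m}. if i \<in> {1..m} then x i else \<one>\<^bsub>GSi i\<^esub>) = x"
  unfolding AA_carrier by (auto simp: fun_eq_iff PiE_def extensional_def)

lemma S_memD: "i \<in> {1..m} \<Longrightarrow> j \<in> S i \<Longrightarrow> j \<in> {1..n}" using S_sub by blast
lemma S_memD': "Suc 0 \<le> i \<Longrightarrow> i \<le> m \<Longrightarrow> j \<in> S i \<Longrightarrow> Suc 0 \<le> j \<and> j \<le> n"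
  using S_memD[of i j] by simp

lemma finite_Dg: "finite Dg"
proof (rule finite_SigmaI)
  show "finite {1..m}" by simp
  fix i assume "i \<in> {1..m}"
  then have "S i \<subseteq> {1..n}" using S_sub by blast
  then show "finite (S i)" by (rule finite_subset) simp
qed

lemma epsA_aA_all: assumes "i \<in> {1..m}" "j \<in> {1..n}"
  shows "epsA (aA G a n m S (i, j)) = (\<lambda>t. if t = (i, j) \<and> j \<in> S i then 1 else 0)"
proof (cases "j \<in> S i")
  case True then show ?thesis using epsA_aA[of "(i,j)"] assms by (simp add: ind_def)
next
  case False
  have o: "aA G a n m S (i, j) = \<one>\<^bsub>AA\<^esub>" unfolding aA_slot aS_one[OF assms(2) False] slot_one ..
  have e: "epsA (aA G a n m S (i, j)) = 0" by (subst o) (rule epsA_one)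
  show ?thesis using e False by (simp add: fun_eq_iff)
qed

lemma epsA_slot_zi: assumes i: "i \<in> {1..m}" shows "epsA (slot i (zi i)) = colV (ind i)"
proof -
  have s: "aS G a n (S i) ` set [1..<Suc n] \<subseteq> carrier (GSi i)" using aS_C by auto
  have "slot i (zi i) = slot i (foldr (\<otimes>\<^bsub>GSi i\<^esub>) (map (aS G a n (S i)) [1..<Suc n]) \<one>\<^bsub>GSi i\<^esub>)"
    by (simp add: zS_def prod_gens_def)
  also have "\<dots> = foldr (\<otimes>\<^bsub>AA\<^esub>) (map (slot i \<circ> aS G a n (S i)) [1..<Suc n]) \<one>\<^bsub>AA\<^esub>"
    by (rule hom_foldr[OF GSi_group AA_group slot_hom s])
  also have "map (slot i \<circ> aS G a n (S i)) [1..<Suc n] = map (\<lambda>j. aA G a n m S (i, j)) [1..<Suc n]"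
    by (simp add: aA_slot comp_def)
  finally have e1: "slot i (zi i) = foldr (\<otimes>\<^bsub>AA\<^esub>) (map (\<lambda>j. aA G a n m S (i, j)) [1..<Suc n]) \<one>\<^bsub>AA\<^esub>" .
  have s2: "(\<lambda>j. aA G a n m S (i, j)) ` set [1..<Suc n] \<subseteq> carrier AA" using aA_C by auto
  have "epsA (slot i (zi i)) = sum_list (map (epsA \<circ> (\<lambda>j. aA G a n m S (i, j))) [1..<Suc n])"
    unfolding e1 by (rule group.zhom_foldr[OF AA_group epsA_zhom s2])
  also have "\<dots> = (\<Sum>j\<in>{1..n}. epsA (aA G a n m S (i, j)))"
    by (simp only: sum_list_distinct_conv_sum_set[OF distinct_upt] set_upt atLeastLessThanSuc_atLeastAtMost comp_def)
  also have "\<dots> = (\<Sum>j\<in>{1..n}. (\<lambda>t. if snd t = j then (if fst t = i \<and> j \<in> S i then 1 else 0) else 0))"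
    by (rule sum.cong) (use epsA_aA_all[OF i] in \<open>auto simp: fun_eq_iff\<close>)
  also have "\<dots> = colV (ind i)"
  proof (rule ext)
    fix p
    show "(\<Sum>j\<in>{1..n}. (\<lambda>t. if snd t = j then (if fst t = i \<and> j \<in> S i then 1 else 0) else 0)) p = colV (ind i) p"
      unfolding sum_delta_fun[OF finite_atLeastAtMost] colV_def ind_def using i by (cases p) (auto dest: S_memD')
  qed
  finally show ?thesis .
qed

lemma epsA_rho_a: assumes j: "j \<in> {1..n}" shows "epsA (rhoG (a j)) = colU (ind j)"
proof -
  have r: "rhoG (a j) \<in> carrier AA" using hom_in_carrier[OF rhoG_hom aC[OF j]] .
  have "epsA (rhoG (a j)) = (\<Sum>i\<in>{1..m}. epsA (slot i (rhoG (a j) i)))"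
    using eps_dec[OF r finite_atLeastAtMost order_refl] restrict_AA[OF r] by simp
  also have "\<dots> = (\<Sum>i\<in>{1..m}. epsA (aA G a n m S (i, j)))"
    by (rule sum.cong) (auto simp: rhoG_def aA_slot aS_cos)
  also have "\<dots> = (\<Sum>i\<in>{1..m}. (\<lambda>t. if fst t = i then (if snd t = j \<and> j \<in> S i then 1 else 0) else 0))"
    by (rule sum.cong) (use epsA_aA_all j in \<open>auto simp: fun_eq_iff\<close>)
  also have "\<dots> = colU (ind j)"
  proof (rule ext)
    fix p
    show "(\<Sum>i\<in>{1..m}. (\<lambda>t. if fst t = i then (if snd t = j \<and> j \<in> S i then 1 else 0) else 0)) p = colU (ind j) p"
      unfolding sum_delta_fun[OF finite_atLeastAtMost] colU_def ind_def by (cases p) auto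
  qed
  finally show ?thesis .
qed

lemma epsA_powz:
  "epsA (\<lambda>i\<in>{1..m}. zi i [^]\<^bsub>GSi i\<^esub> (\<beta> i :: int)) = colV \<beta>"
proof -
  let ?x = "(\<lambda>i\<in>{1..m}. zi i [^]\<^bsub>GSi i\<^esub> (\<beta> i :: int))"
  have xC: "?x \<in> carrier AA" unfolding AA_carrier using zi_C group.int_pow_closed[OF GSi_group] by auto
  have "epsA ?x = (\<Sum>i\<in>{1..m}. epsA (slot i (?x i)))"
    using eps_dec[OF xC finite_atLeastAtMost order_refl] restrict_AA[OF xC] by simp
  also have "\<dots> = (\<Sum>i\<in>{1..m}. (\<lambda>t. \<beta> i * colV (ind i) t))"
  proof (rule sum.cong)
    fix i assume i: "i \<in> {1..m}"
    have "slot i (?x i) = slot i (zi i) [^]\<^bsub>AA\<^esub> \<beta> i"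
      using i hom_int_pow[OF slot_hom zi_C GSi_group AA_group] by simp
    then show "epsA (slot i (?x i)) = (\<lambda>t. \<beta> i * colV (ind i) t)"
      using group.zhom_pow[OF AA_group epsA_zhom slot_C[OF zi_C]] epsA_slot_zi[OF i] by simp
  qed simp
  also have "\<dots> = (\<Sum>i\<in>{1..m}. (\<lambda>t. if fst t = i then (if t \<in> Dg then \<beta> i else 0) else 0))"
    by (rule sum.cong) (auto simp: fun_eq_iff colV_def ind_def)
  also have "\<dots> = colV \<beta>"
  proof (rule ext)
    fix p
    show "(\<Sum>i\<in>{1..m}. (\<lambda>t. if fst t = i then (if t \<in> Dg then \<beta> i else 0) else 0)) p = colV \<beta> p"
      unfolding sum_delta_fun[OF finite_atLeastAtMost] colV_def by auto
  qed
  finally show ?thesis .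
qed

lemma ker_piA_colV:
  assumes x: "x \<in> carrier AA" and k: "\<forall>i\<in>{1..m}. x i \<in> Zi i"
  shows "\<exists>\<beta>. epsA x = colV \<beta>"
proof -
  have ex: "\<exists>b::int. x i = zi i [^]\<^bsub>GSi i\<^esub> b" if "i \<in> {1..m}" for i
    using k that group.generate_pow[OF GSi_group zi_C] by blast
  define \<beta> where "\<beta> = (\<lambda>i. SOME b::int. x i = zi i [^]\<^bsub>GSi i\<^esub> b)"
  have "x = (\<lambda>i\<in>{1..m}. zi i [^]\<^bsub>GSi i\<^esub> \<beta> i)"
  proof (rule ext)
    fix i show "x i = (\<lambda>i\<in>{1..m}. zi i [^]\<^bsub>GSi i\<^esub> \<beta> i) i"
    proof (cases "i \<in> {1..m}")
      case True then show ?thesis unfolding \<beta>_def using someI_ex[OF ex[OF True]] by simp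
    next
      case False then show ?thesis using x unfolding AA_carrier by (auto simp: PiE_def extensional_def)
    qed
  qed
  then show ?thesis using epsA_powz by metis
qed

lemma colV_realized: "\<exists>x\<in>carrier AA. piA x = \<one>\<^bsub>AB\<^esub> \<and> epsA x = colV \<beta>"
proof -
  let ?x = "(\<lambda>i\<in>{1..m}. zi i [^]\<^bsub>GSi i\<^esub> (\<beta> i :: int))"
  have xC: "?x \<in> carrier AA" unfolding AA_carrier using zi_C group.int_pow_closed[OF GSi_group] by auto
  have "\<forall>i\<in>{1..m}. ?x i \<in> Zi i" using group.generate_pow[OF GSi_group zi_C] by auto
  then show ?thesis using xC piA_one_iff[OF xC] epsA_powz by blast
qed

end



lemma zhom_ker_subgroup:
  assumes "group G" "zhom G \<phi>" shows "subgroup {x \<in> carrier G. \<phi> x = 0} G"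
proof -
  interpret group G by (rule assms(1))
  show ?thesis
  proof
    show "{x \<in> carrier G. \<phi> x = 0} \<subseteq> carrier G" by auto
    show "\<one>\<^bsub>G\<^esub> \<in> {x \<in> carrier G. \<phi> x = 0}" using zhom_one[OF assms(2)] by auto
    fix x y assume "x \<in> {x \<in> carrier G. \<phi> x = 0}" "y \<in> {x \<in> carrier G. \<phi> x = 0}"
    then show "x \<otimes>\<^bsub>G\<^esub> y \<in> {x \<in> carrier G. \<phi> x = 0}" using zhomD[OF assms(2)] by auto
  next
    fix x assume "x \<in> {x \<in> carrier G. \<phi> x = 0}"
    then show "inv\<^bsub>G\<^esub> x \<in> {x \<in> carrier G. \<phi> x = 0}" using zhom_inv[OF assms(2)] by auto
  qed
qed

context setting begin

lemma rhoG_gh: "group_hom G AA rhoG"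
  using grp AA_group rhoG_hom by (simp add: group_hom_def group_hom_axioms_def)

lemma colU_add: "colU \<alpha> + colU \<alpha>' = colU (\<lambda>j. \<alpha> j + \<alpha>' j)"
  by (auto simp: colU_def fun_eq_iff)
lemma colU_neg: "- colU \<alpha> = colU (\<lambda>j. - \<alpha> j)"
  by (auto simp: colU_def fun_eq_iff)
lemma colU_zero: "colU (\<lambda>j. 0) = 0"
  by (auto simp: colU_def fun_eq_iff)

lemma GS1: assumes h: "h \<in> carrier G" shows "\<exists>\<alpha>. epsA (rhoG h) = colU \<alpha>"
proof -
  interpret rh: group_hom G AA rhoG by (rule rhoG_gh)
  let ?W = "{h \<in> carrier G. \<exists>\<alpha>. epsA (rhoG h) = colU \<alpha>}"
  have sg: "subgroup ?W G"
  proof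
    show "?W \<subseteq> carrier G" by auto
    show "\<one>\<^bsub>G\<^esub> \<in> ?W" using epsA_one colU_zero by (metis (mono_tags, lifting) mem_Collect_eq rh.G.one_closed rh.hom_one)
  next
    fix x y assume x: "x \<in> ?W" and y: "y \<in> ?W"
    then obtain \<alpha> \<alpha>' where a: "epsA (rhoG x) = colU \<alpha>" "epsA (rhoG y) = colU \<alpha>'" by auto
    have "epsA (rhoG (x \<otimes>\<^bsub>G\<^esub> y)) = epsA (rhoG x) + epsA (rhoG y)"
      using x y zhomD[OF epsA_zhom] by simp
    then show "x \<otimes>\<^bsub>G\<^esub> y \<in> ?W" using a x y colU_add by auto
  next
    fix x assume x: "x \<in> ?W"
    then obtain \<alpha> where a: "epsA (rhoG x) = colU \<alpha>" by auto
    have "epsA (rhoG (inv\<^bsub>G\<^esub> x)) = - epsA (rhoG x)"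
      using x group.zhom_inv[OF AA_group epsA_zhom] by simp
    then show "inv\<^bsub>G\<^esub> x \<in> ?W" using a x colU_neg by auto
  qed
  have "a ` {1..n} \<subseteq> ?W" using epsA_rho_a aC by auto
  then have "generate G (a ` {1..n}) \<subseteq> ?W" by (rule rh.G.generate_subgroup_incl[OF _ sg])
  then show ?thesis using h generates by auto
qed

lemma GS2: "\<exists>h\<in>carrier G. epsA (rhoG h) = colU \<alpha>"
proof -
  interpret rh: group_hom G AA rhoG by (rule rhoG_gh)
  have P: "finite J \<Longrightarrow> J \<subseteq> {1..n} \<Longrightarrow> \<exists>h\<in>carrier G. epsA (rhoG h) = colU (\<lambda>j. if j \<in> J then \<alpha> j else 0)" for J
  proof (induction J rule: finite_induct)
    case empty
    show ?case using epsA_one colU_zero by (intro bexI[of _ "\<one>\<^bsub>G\<^esub>"]) auto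
  next
    case (insert k F)
    obtain h where h: "h \<in> carrier G" "epsA (rhoG h) = colU (\<lambda>j. if j \<in> F then \<alpha> j else 0)"
      using insert by auto
    have k: "k \<in> {1..n}" using insert.prems by auto
    let ?h' = "a k [^]\<^bsub>G\<^esub> \<alpha> k \<otimes>\<^bsub>G\<^esub> h"
    have akC: "a k [^]\<^bsub>G\<^esub> \<alpha> k \<in> carrier G" using aC[OF k] by simp
    have "epsA (rhoG ?h') = epsA (rhoG (a k [^]\<^bsub>G\<^esub> \<alpha> k)) + epsA (rhoG h)"
      using akC h(1) zhomD[OF epsA_zhom] by simp
    also have "epsA (rhoG (a k [^]\<^bsub>G\<^esub> \<alpha> k)) = (\<lambda>t. \<alpha> k * colU (ind k) t)"
      using rh.hom_int_pow[OF aC[OF k]] group.zhom_pow[OF AA_group epsA_zhom] aC[OF k] epsA_rho_a[OF k]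
      by simp
    also have "(\<lambda>t. \<alpha> k * colU (ind k) t) + epsA (rhoG h) = colU (\<lambda>j. if j \<in> insert k F then \<alpha> j else 0)"
      unfolding h(2) using insert.hyps(2) by (auto simp: colU_def ind_def fun_eq_iff)
    finally show ?case using akC h(1) by blast
  qed
  obtain h where h: "h \<in> carrier G" "epsA (rhoG h) = colU (\<lambda>j. if j \<in> {1..n} then \<alpha> j else 0)"
    using P[OF finite_atLeastAtMost order_refl] by blast
  have "colU (\<lambda>j. if j \<in> {1..n} then \<alpha> j else 0) = colU \<alpha>"
    unfolding colU_def using S_memD by (auto simp: fun_eq_iff)
  then show ?thesis using h by auto
qed

definition "V0 = Inl ` {1..m} \<union> Inr ` {1..n}"
definition srcf :: "nat \<times> nat \<Rightarrow> nat + nat" where "srcf p = Inl (fst p)"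
definition tgtf :: "nat \<times> nat \<Rightarrow> nat + nat" where "tgtf p = Inr (snd p)"

definition "GD = (SOME q. ginv V0 Dg srcf tgtf (fst q) (fst (snd q)) (fst (snd (snd q))) (snd (snd (snd q))) \<and>
     card (fst q) + card V0 = card Dg + card (V0 // ((grel Dg srcf tgtf)\<^sup>* \<inter> V0 \<times> V0)))"
definition "Kx = fst GD"
definition "Tx = fst (snd GD)"

lemma GD: "ginv V0 Dg srcf tgtf Kx Tx (fst (snd (snd GD))) (snd (snd (snd GD))) \<and>
     card Kx + card V0 = card Dg + card (V0 // ((grel Dg srcf tgtf)\<^sup>* \<inter> V0 \<times> V0))"
proof -
  have fV: "finite V0" unfolding V0_def by simp
  have e: "\<forall>d\<in>Dg. srcf d \<in> V0 \<and> tgtf d \<in> V0" unfolding V0_def srcf_def tgtf_def using S_memD by auto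
  obtain K T sg rh where "ginv V0 Dg srcf tgtf K T sg rh \<and>
     card K + card V0 = card Dg + card (V0 // ((grel Dg srcf tgtf)\<^sup>* \<inter> V0 \<times> V0))"
    using graph_main[OF finite_Dg fV e] by blast
  then have "\<exists>q. ginv V0 Dg srcf tgtf (fst q) (fst (snd q)) (fst (snd (snd q))) (snd (snd (snd q))) \<and>
     card (fst q) + card V0 = card Dg + card (V0 // ((grel Dg srcf tgtf)\<^sup>* \<inter> V0 \<times> V0))"
    by (intro exI[of _ "(K, T, sg, rh)"]) simp
  from someI_ex[OF this] show ?thesis unfolding Kx_def Tx_def GD_def .
qed

lemma Kx_fin: "finite Kx" using ginvD(1)[OF GD[THEN conjunct1]] finite_Dg finite_subset by blast
lemma Tx_Zf: "f \<in> Zf Dg \<Longrightarrow> Tx f \<in> Zf Kx" using ginvD(2)[OF GD[THEN conjunct1]] by blast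
lemma Tx_add: "f \<in> Zf Dg \<Longrightarrow> f' \<in> Zf Dg \<Longrightarrow> Tx (f + f') = Tx f + Tx f'"
  using additiveD[OF ginvD(3)[OF GD[THEN conjunct1]]] by blast
lemma Tx_delta: "Tx (delta Dg srcf tgtf g) = 0" using ginvD(9)[OF GD[THEN conjunct1]] by blast
lemma Tx_surj: "h \<in> Zf Kx \<Longrightarrow> \<exists>f\<in>Zf Dg. Tx f = h"
  using ginvD(4,6)[OF GD[THEN conjunct1]] by blast
lemma Tx_ker: assumes f: "f \<in> Zf Dg" and z: "Tx f = 0" shows "\<exists>g. f = delta Dg srcf tgtf g"
proof -
  let ?sg = "fst (snd (snd GD))" and ?rh = "snd (snd (snd GD))"
  have sa: "additive (Zf Kx) ?sg" using ginvD(5)[OF GD[THEN conjunct1]] .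
  have "f = delta Dg srcf tgtf (?rh f) + ?sg (Tx f)" using ginvD(8)[OF GD[THEN conjunct1]] f by blast
  then have "f = delta Dg srcf tgtf (?rh f)" using additive_zero[OF sa] z by simp
  then show ?thesis by blast
qed

lemma delta_col: "delta Dg srcf tgtf g = colV (\<lambda>i. g (Inl i)) - colU (\<lambda>j. g (Inr j))"
  by (auto simp: delta_def colV_def colU_def srcf_def tgtf_def fun_eq_iff)

lemma colV_delta: "colV \<beta> = delta Dg srcf tgtf (\<lambda>v. case v of Inl i \<Rightarrow> \<beta> i | Inr j \<Rightarrow> 0)"
  by (auto simp: delta_def colV_def srcf_def tgtf_def fun_eq_iff)

lemma colU_delta: "colU \<alpha> = delta Dg srcf tgtf (\<lambda>v. case v of Inl i \<Rightarrow> 0 | Inr j \<Rightarrow> - \<alpha> j)"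
  by (auto simp: delta_def colU_def srcf_def tgtf_def fun_eq_iff)

lemma Tx_colV: "Tx (colV \<beta>) = 0" unfolding colV_delta by (rule Tx_delta)
lemma Tx_colU: "Tx (colU \<alpha>) = 0" unfolding colU_delta by (rule Tx_delta)

end



context setting begin

definition phiA where "phiA x = Tx (epsA x)"

lemma phiA_zhom: "zhom AA phiA"
  unfolding zhom_def phiA_def
  using zhomD[OF epsA_zhom] Tx_add epsA_Zf by auto

lemma phiA_Zf: "x \<in> carrier AA \<Longrightarrow> phiA x \<in> Zf Kx"
  unfolding phiA_def using Tx_Zf epsA_Zf by blast

lemma phiA_kill: assumes x: "x \<in> carrier AA" and p: "piA x = \<one>\<^bsub>AB\<^esub>" shows "phiA x = 0"
proof -
  obtain \<beta> where "epsA x = colV \<beta>" using ker_piA_colV[OF x] piA_one_iff[OF x] p by blast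
  then show ?thesis unfolding phiA_def using Tx_colV by simp
qed

definition "PhiB = (SOME \<Psi>. zhom AB \<Psi> \<and> (\<forall>x\<in>carrier AA. \<Psi> (piA x) = phiA x))"

lemma PhiB: "zhom AB PhiB \<and> (\<forall>x\<in>carrier AA. PhiB (piA x) = phiA x)"
  unfolding PhiB_def
  by (rule someI_ex[OF zhom_desc[OF AA_group AB_group piA_hom piA_surj phiA_zhom]]) (use phiA_kill in blast)

abbreviation "HB \<equiv> abelianization AB"
abbreviation "dB \<equiv> derived AB (carrier AB)"

lemma dB_normal: "dB \<lhd> AB" using group.derived_self_is_normal[OF AB_group] .
lemma HB_group: "group HB" unfolding abelianization_def by (rule group.derived_quot_is_group[OF AB_group])
lemma HB_comm: "comm_group HB" unfolding abelianization_def by (rule group.derived_quot_is_comm_group[OF AB_group])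
lemma cosB_hom: "(\<lambda>y. dB #>\<^bsub>AB\<^esub> y) \<in> hom AB HB"
  unfolding abelianization_def using normal.r_coset_hom_Mod[OF dB_normal] .
lemma HB_carrier: "carrier HB = (\<lambda>y. dB #>\<^bsub>AB\<^esub> y) ` carrier AB"
  unfolding abelianization_def by (rule carrier_FactGroup)

lemma PhiB_kill: assumes y: "y \<in> carrier AB" and e: "dB #>\<^bsub>AB\<^esub> y = \<one>\<^bsub>HB\<^esub>" shows "PhiB y = 0"
proof -
  have "dB #>\<^bsub>AB\<^esub> y = dB" using e unfolding abelianization_def by simp
  moreover have "y \<in> dB #>\<^bsub>AB\<^esub> y"
    using group.rcos_self[OF AB_group y] dB_normal by (simp add: normal_def)
  ultimately have "y \<in> dB" by simp
  then show ?thesis using group.zhom_kills_derived[OF AB_group] PhiB by blast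
qed

definition "PhiH = (SOME \<Psi>. zhom HB \<Psi> \<and> (\<forall>y\<in>carrier AB. \<Psi> (dB #>\<^bsub>AB\<^esub> y) = PhiB y))"

lemma PhiH: "zhom HB PhiH \<and> (\<forall>y\<in>carrier AB. PhiH (dB #>\<^bsub>AB\<^esub> y) = PhiB y)"
  unfolding PhiH_def
  by (rule someI_ex[OF zhom_desc[OF AB_group HB_group cosB_hom HB_carrier[symmetric]]])
     (use PhiB PhiB_kill in blast)+

lemma PhiH_val: "x \<in> carrier AA \<Longrightarrow> PhiH (dB #>\<^bsub>AB\<^esub> piA x) = phiA x"
  using PhiH PhiB hom_in_carrier[OF piA_hom] by auto

lemma HB_repr: assumes "Xh \<in> carrier HB" shows "\<exists>x\<in>carrier AA. Xh = dB #>\<^bsub>AB\<^esub> piA x"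
  using assms unfolding HB_carrier piA_surj[symmetric] by auto

lemma PhiH_Zf: "Xh \<in> carrier HB \<Longrightarrow> PhiH Xh \<in> Zf Kx"
  using HB_repr PhiH_val phiA_Zf by metis

lemma PhiH_surj: assumes h: "h \<in> Zf Kx" shows "\<exists>Xh\<in>carrier HB. PhiH Xh = h"
proof -
  obtain f where f: "f \<in> Zf Dg" "Tx f = h" using Tx_surj[OF h] by blast
  obtain x where x: "x \<in> carrier AA" "epsA x = f" using epsA_surj[OF f(1)] by blast
  have "dB #>\<^bsub>AB\<^esub> piA x \<in> carrier HB" unfolding HB_carrier using x hom_in_carrier[OF piA_hom] by auto
  moreover have "PhiH (dB #>\<^bsub>AB\<^esub> piA x) = h" using PhiH_val[OF x(1)] x f unfolding phiA_def by simp
  ultimately show ?thesis by blast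
qed

abbreviation "Zg \<equiv> generate G {zz}"

lemma Zg_normal: "Zg \<lhd> G"
proof -
  interpret group G by (rule grp)
  show ?thesis
  proof (rule normal_generateI)
    show "{zz} \<subseteq> carrier G" using zzC by auto
    fix h g assume h: "h \<in> {zz}" and g: "g \<in> carrier G"
    have "g \<otimes>\<^bsub>G\<^esub> zz \<otimes>\<^bsub>G\<^esub> inv\<^bsub>G\<^esub> g = zz \<otimes>\<^bsub>G\<^esub> g \<otimes>\<^bsub>G\<^esub> inv\<^bsub>G\<^esub> g"
      using central g by simp
    also have "\<dots> = zz" using g zzC by (simp add: m_assoc)
    finally show "g \<otimes>\<^bsub>G\<^esub> h \<otimes>\<^bsub>G\<^esub> inv\<^bsub>G\<^esub> g \<in> {zz}" using h by simp
  qed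
qed

abbreviation "GB \<equiv> Gbar G a n"
abbreviation "dG \<equiv> derived GB (carrier GB)"
abbreviation "HG \<equiv> abelianization GB"

lemma GB_def': "GB = G Mod Zg" by (simp add: Gbar_def)
lemma GB_group: "group GB" unfolding GB_def' using normal.factorgroup_is_group[OF Zg_normal] .
lemma cosG_hom: "(\<lambda>g. Zg #>\<^bsub>G\<^esub> g) \<in> hom G GB"
  unfolding GB_def' using normal.r_coset_hom_Mod[OF Zg_normal] .
lemma GB_carrier: "carrier GB = (\<lambda>g. Zg #>\<^bsub>G\<^esub> g) ` carrier G"
  unfolding GB_def' by (rule carrier_FactGroup)
lemma dG_normal: "dG \<lhd> GB" using group.derived_self_is_normal[OF GB_group] .
lemma HG_group: "group HG" unfolding abelianization_def by (rule group.derived_quot_is_group[OF GB_group])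
lemma cosGB_hom: "(\<lambda>C. dG #>\<^bsub>GB\<^esub> C) \<in> hom GB HG"
  unfolding abelianization_def using normal.r_coset_hom_Mod[OF dG_normal] .
lemma HG_carrier: "carrier HG = (\<lambda>C. dG #>\<^bsub>GB\<^esub> C) ` carrier GB"
  unfolding abelianization_def by (rule carrier_FactGroup)

definition tau where "tau g = dB #>\<^bsub>AB\<^esub> piA (rhoG g)"
definition qG where "qG g = dG #>\<^bsub>GB\<^esub> (Zg #>\<^bsub>G\<^esub> g)"

lemma tau_hom: "tau \<in> hom G HB"
proof -
  have "(\<lambda>y. dB #>\<^bsub>AB\<^esub> y) \<circ> (piA \<circ> rhoG) \<in> hom G HB"
    by (rule hom_compose[OF hom_compose[OF rhoG_hom piA_hom] cosB_hom])
  then show ?thesis unfolding tau_def comp_def .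
qed

lemma qG_hom: "qG \<in> hom G HG"
proof -
  have "(\<lambda>C. dG #>\<^bsub>GB\<^esub> C) \<circ> (\<lambda>g. Zg #>\<^bsub>G\<^esub> g) \<in> hom G HG"
    by (rule hom_compose[OF cosG_hom cosGB_hom])
  then show ?thesis unfolding qG_def comp_def .
qed

lemma rho_bar_eq: "rho_bar G a n m S C = piA (rhoG (SOME g. g \<in> C))"
  unfolding rho_bar_def piA_def rhoG_def by (intro restrict_ext) simp

lemma rho_bar_ab_eq: "rho_bar_ab G a n m S Y = tau (SOME g. g \<in> (SOME C. C \<in> Y))"
  unfolding rho_bar_ab_def tau_def rho_bar_eq ..

lemma repr_G:
  assumes Y: "Y \<in> carrier HG"
  shows "\<exists>g\<in>carrier G. rho_bar_ab G a n m S Y = tau g \<and> Y = qG g"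
proof -
  interpret GBg: group GB by (rule GB_group)
  interpret Gg: group G by (rule grp)
  have sgdG: "subgroup dG GB" using dG_normal by (simp add: normal_def)
  have sgZ: "subgroup Zg G" using Zg_normal by (simp add: normal_def)
  obtain C0 where C0: "C0 \<in> carrier GB" "Y = dG #>\<^bsub>GB\<^esub> C0" using Y HG_carrier by auto
  have "C0 \<in> Y" using GBg.rcos_self[OF C0(1) sgdG] C0(2) by simp
  define C where "C = (SOME C. C \<in> Y)"
  have CY: "C \<in> Y" unfolding C_def using \<open>C0 \<in> Y\<close> by (rule someI)
  have YC: "Y \<subseteq> carrier GB" unfolding C0(2) by (rule GBg.r_coset_subset_G[OF subgroup.subset[OF sgdG] C0(1)])
  have Cc: "C \<in> carrier GB" using CY YC by auto
  have Y2: "Y = dG #>\<^bsub>GB\<^esub> C" using GBg.repr_independence[OF CY[unfolded C0(2)] C0(1) sgdG] C0(2) by simp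
  obtain g0 where g0: "g0 \<in> carrier G" "C = Zg #>\<^bsub>G\<^esub> g0" using Cc GB_carrier by auto
  have "g0 \<in> C" using Gg.rcos_self[OF g0(1) sgZ] g0(2) by simp
  define g where "g = (SOME g. g \<in> C)"
  have gC: "g \<in> C" unfolding g_def using \<open>g0 \<in> C\<close> by (rule someI)
  have gc: "g \<in> carrier G" using gC g0 Gg.r_coset_subset_G[OF subgroup.subset[OF sgZ] g0(1)] by auto
  have C2: "C = Zg #>\<^bsub>G\<^esub> g" using Gg.repr_independence[OF gC[unfolded g0(2)] g0(1) sgZ] g0(2) by simp
  have "rho_bar_ab G a n m S Y = tau g" unfolding rho_bar_ab_eq g_def C_def ..
  moreover have "Y = qG g" unfolding qG_def using Y2 C2 by simp
  ultimately show ?thesis using gc by blast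
qed

lemma tau_zz: "tau zz = \<one>\<^bsub>HB\<^esub>"
proof -
  have "tau zz = dB #>\<^bsub>AB\<^esub> \<one>\<^bsub>AB\<^esub>" unfolding tau_def rhoG_zz ..
  also have "\<dots> = dB" by (rule group.coset_mult_one[OF AB_group]) (rule group.derived_in_carrier[OF AB_group order_refl])
  finally show ?thesis unfolding abelianization_def by simp
qed

lemma tau_fact:
  assumes g1: "g1 \<in> carrier G" and g2: "g2 \<in> carrier G" and q: "qG g1 = qG g2"
  shows "tau g1 = tau g2"
proof -
  interpret Gg: group G by (rule grp)
  interpret qh: group_hom G HG qG using grp HG_group qG_hom by (simp add: group_hom_def group_hom_axioms_def)
  interpret th: group_hom G HB tau using grp HB_group tau_hom by (simp add: group_hom_def group_hom_axioms_def)
  interpret ch: group_hom G GB "\<lambda>g. Zg #>\<^bsub>G\<^esub> g" using grp GB_group cosG_hom by (simp add: group_hom_def group_hom_axioms_def)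
  interpret GBg: group GB by (rule GB_group)
  have sgZ: "subgroup Zg G" using Zg_normal by (simp add: normal_def)
  have sgdG: "subgroup dG GB" using dG_normal by (simp add: normal_def)
  define e where "e = g1 \<otimes>\<^bsub>G\<^esub> inv\<^bsub>G\<^esub> g2"
  have ec: "e \<in> carrier G" unfolding e_def using g1 g2 by simp
  have "qG e = qG g1 \<otimes>\<^bsub>HG\<^esub> inv\<^bsub>HG\<^esub> (qG g2)" unfolding e_def using g1 g2 by simp
  also have "\<dots> = \<one>\<^bsub>HG\<^esub>" unfolding q using g2 by simp
  finally have "qG e = dG" unfolding abelianization_def by simp
  then have ce: "dG #>\<^bsub>GB\<^esub> (Zg #>\<^bsub>G\<^esub> e) = dG" unfolding qG_def .
  have ceC: "Zg #>\<^bsub>G\<^esub> e \<in> carrier GB" using ec GB_carrier by auto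
  have "Zg #>\<^bsub>G\<^esub> e \<in> dG" using ch.H.rcos_self[OF ceC sgdG] ce by simp
  moreover have "dG = (\<lambda>g. Zg #>\<^bsub>G\<^esub> g) ` derived G (carrier G)"
    using ch.derived_img[of "carrier G"] GB_carrier by simp
  ultimately obtain d where d: "d \<in> derived G (carrier G)" "Zg #>\<^bsub>G\<^esub> e = Zg #>\<^bsub>G\<^esub> d" by auto
  have dc: "d \<in> carrier G" using d(1) Gg.derived_in_carrier[OF order_refl] by auto
  have "e \<in> Zg #>\<^bsub>G\<^esub> d" using Gg.rcos_self[OF ec sgZ] d(2) by simp
  then obtain c where c: "c \<in> Zg" "e = c \<otimes>\<^bsub>G\<^esub> d" unfolding r_coset_def by auto
  have cc: "c \<in> carrier G" using c(1) subgroup.subset[OF sgZ] by auto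
  have td: "tau d = \<one>\<^bsub>HB\<^esub>" by (rule hom_kills_derived[OF grp HB_comm tau_hom d(1)])
  have "{zz} \<subseteq> kernel G HB tau" using tau_zz zzC by (auto simp: kernel_def)
  then have "Zg \<subseteq> kernel G HB tau" by (rule Gg.generate_subgroup_incl[OF _ th.subgroup_kernel])
  then have tc: "tau c = \<one>\<^bsub>HB\<^esub>" using c(1) by (auto simp: kernel_def)
  have te: "tau e = \<one>\<^bsub>HB\<^esub>" using c(2) cc dc td tc by simp
  have "g1 = e \<otimes>\<^bsub>G\<^esub> g2" unfolding e_def using g1 g2 by (simp add: Gg.m_assoc)
  then have "tau g1 = tau e \<otimes>\<^bsub>HB\<^esub> tau g2" using ec g2 by simp
  then show ?thesis using te g2 by simp
qed

lemma PhiH_tau: assumes g: "g \<in> carrier G" shows "PhiH (tau g) = 0"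
proof -
  obtain \<alpha> where "epsA (rhoG g) = colU \<alpha>" using GS1[OF g] by blast
  then show ?thesis unfolding tau_def using PhiH_val[OF hom_in_carrier[OF rhoG_hom g]] Tx_colU
    unfolding phiA_def by simp
qed

lemma KEY: "rho_bar_ab G a n m S ` carrier HG = {Xh \<in> carrier HB. PhiH Xh = 0}"
proof
  show "rho_bar_ab G a n m S ` carrier HG \<subseteq> {Xh \<in> carrier HB. PhiH Xh = 0}"
  proof
    fix Xh assume "Xh \<in> rho_bar_ab G a n m S ` carrier HG"
    then obtain Y where Y: "Y \<in> carrier HG" "Xh = rho_bar_ab G a n m S Y" by auto
    obtain g where g: "g \<in> carrier G" "rho_bar_ab G a n m S Y = tau g" using repr_G[OF Y(1)] by blast
    show "Xh \<in> {Xh \<in> carrier HB. PhiH Xh = 0}"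
      using Y(2) g hom_in_carrier[OF tau_hom g(1)] PhiH_tau[OF g(1)] by simp
  qed
next
  show "{Xh \<in> carrier HB. PhiH Xh = 0} \<subseteq> rho_bar_ab G a n m S ` carrier HG"
  proof
    fix Xh assume Xh: "Xh \<in> {Xh \<in> carrier HB. PhiH Xh = 0}"
    interpret AAg: group AA by (rule AA_group)
    interpret ABg: group AB by (rule AB_group)
    interpret ph: group_hom AA AB piA using AA_group AB_group piA_hom by (simp add: group_hom_def group_hom_axioms_def)
    interpret rh: group_hom G AA rhoG by (rule rhoG_gh)
    obtain x where x: "x \<in> carrier AA" "Xh = dB #>\<^bsub>AB\<^esub> piA x" using HB_repr Xh by auto
    have "phiA x = 0" using PhiH_val[OF x(1)] x(2) Xh by simp
    then obtain g0 where "epsA x = delta Dg srcf tgtf g0" using Tx_ker epsA_Zf[OF x(1)] unfolding phiA_def by blast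
    then have ex: "epsA x = colV (\<lambda>i. g0 (Inl i)) - colU (\<lambda>j. g0 (Inr j))" unfolding delta_col .
    obtain xk where xk: "xk \<in> carrier AA" "piA xk = \<one>\<^bsub>AB\<^esub>" "epsA xk = colV (\<lambda>i. g0 (Inl i))"
      using colV_realized by blast
    obtain h where h: "h \<in> carrier G" "epsA (rhoG h) = colU (\<lambda>j. g0 (Inr j))" using GS2 by blast
    have rh: "rhoG h \<in> carrier AA" using h(1) by simp
    define w where "w = x \<otimes>\<^bsub>AA\<^esub> inv\<^bsub>AA\<^esub> xk \<otimes>\<^bsub>AA\<^esub> rhoG h"
    have wc: "w \<in> carrier AA" unfolding w_def using x xk rh by simp
    have "epsA w = epsA x + - epsA xk + epsA (rhoG h)"
      unfolding w_def using x(1) xk(1) rh zhomD[OF epsA_zhom] AAg.zhom_inv[OF epsA_zhom] by simp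
    also have "\<dots> = 0" unfolding ex xk(3) h(2) by simp
    finally have "w \<in> dA" using epsA_zero[OF wc] by simp
    then have pw: "piA w \<in> dB" using ph.derived_img[of "carrier AA"] piA_surj by auto
    define h' where "h' = inv\<^bsub>G\<^esub> h"
    have h'c: "h' \<in> carrier G" unfolding h'_def using h(1) by simp
    have "w \<otimes>\<^bsub>AA\<^esub> rhoG h' \<otimes>\<^bsub>AA\<^esub> xk = x"
      unfolding w_def h'_def using x(1) xk(1) h(1) rh by (simp add: AAg.m_assoc)
    then have "piA x = piA w \<otimes>\<^bsub>AB\<^esub> piA (rhoG h') \<otimes>\<^bsub>AB\<^esub> piA xk"
      using wc h'c xk(1) by auto
    also have "\<dots> = piA w \<otimes>\<^bsub>AB\<^esub> piA (rhoG h')" using xk(2) wc h'c by simp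
    finally have px: "piA x = piA w \<otimes>\<^bsub>AB\<^esub> piA (rhoG h')" .
    have sgdB: "subgroup dB AB" using dB_normal by (simp add: normal_def)
    have pr: "piA (rhoG h') \<in> carrier AB" using h'c by simp
    have "piA w \<otimes>\<^bsub>AB\<^esub> piA (rhoG h') \<in> dB #>\<^bsub>AB\<^esub> piA (rhoG h')"
      by (rule ABg.rcosI[OF pw subgroup.subset[OF sgdB] pr])
    then have "dB #>\<^bsub>AB\<^esub> piA (rhoG h') = dB #>\<^bsub>AB\<^esub> (piA w \<otimes>\<^bsub>AB\<^esub> piA (rhoG h'))"
      by (rule ABg.repr_independence[OF _ pr sgdB])
    then have Xt: "Xh = tau h'" unfolding tau_def x(2) px by simp
    have Yc: "qG h' \<in> carrier HG" using hom_in_carrier[OF qG_hom h'c] .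
    obtain g'' where g'': "g'' \<in> carrier G" "rho_bar_ab G a n m S (qG h') = tau g''" "qG h' = qG g''"
      using repr_G[OF Yc] by blast
    have "tau g'' = tau h'" by (rule tau_fact[OF g''(1) h'c g''(3)[symmetric]])
    then have "Xh = rho_bar_ab G a n m S (qG h')" using Xt g''(2) by simp
    then show "Xh \<in> rho_bar_ab G a n m S ` carrier HG" using Yc by blast
  qed
qed

end



context setting begin

lemma final:
  "\<exists>B. free_abelian_basis
         (abelianization (Abar G a n m S)
            Mod (rho_bar_ab G a n m S ` carrier (abelianization (Gbar G a n)))) B id
     \<and> int (card B) = (\<Sum>i\<in>{1..m}. int (card (S i))) - int n - int m
                       + int (num_components (Lambda_vertices m n) (Lambda_edges m S))"
proof -
  define Im where "Im = rho_bar_ab G a n m S ` carrier HG"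
  have ImK: "Im = {Xh \<in> carrier HB. PhiH Xh = 0}" unfolding Im_def by (rule KEY)
  interpret HBc: comm_group HB by (rule HB_comm)
  have zH: "zhom HB PhiH" using PhiH by blast
  have sgI: "subgroup Im HB" unfolding ImK by (rule zhom_ker_subgroup[OF HB_group zH])
  have nI: "Im \<lhd> HB" using sgI HBc.normal_iff_subgroup by blast
  define Q where "Q = HB Mod Im"
  have cQ: "comm_group Q" unfolding Q_def by (rule HBc.abelian_FactGroup[OF sgI])
  have gQ: "group Q" using cQ comm_group.axioms(2) by blast
  have cosQ: "(\<lambda>Xh. Im #>\<^bsub>HB\<^esub> Xh) \<in> hom HB Q" unfolding Q_def by (rule normal.r_coset_hom_Mod[OF nI])
  have Qc: "carrier Q = (\<lambda>Xh. Im #>\<^bsub>HB\<^esub> Xh) ` carrier HB" unfolding Q_def by (rule carrier_FactGroup)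
  have Q1: "\<one>\<^bsub>Q\<^esub> = Im" unfolding Q_def by simp
  have inIm: "Xh \<in> Im" if "Xh \<in> carrier HB" "Im #>\<^bsub>HB\<^esub> Xh = Im" for Xh
    using HBc.rcos_self[OF that(1) sgI] that(2) by simp
  have kill: "\<forall>Xh\<in>carrier HB. Im #>\<^bsub>HB\<^esub> Xh = \<one>\<^bsub>Q\<^esub> \<longrightarrow> PhiH Xh = 0"
    using inIm Q1 ImK by auto
  obtain PsiQ where PsiQ: "zhom Q PsiQ" "\<forall>Xh\<in>carrier HB. PsiQ (Im #>\<^bsub>HB\<^esub> Xh) = PhiH Xh"
    using zhom_desc[OF HB_group gQ cosQ Qc[symmetric] zH kill] by blast
  define XX where "XX = (\<lambda>k. SOME Xh. Xh \<in> carrier HB \<and> PhiH Xh = ind k)"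
  have indZ: "ind k \<in> Zf Kx" if "k \<in> Kx" for k using that by (auto simp: Zf_def ind_def)
  have XX: "XX k \<in> carrier HB \<and> PhiH (XX k) = ind k" if "k \<in> Kx" for k
  proof -
    have "\<exists>Xh. Xh \<in> carrier HB \<and> PhiH Xh = ind k" using PhiH_surj[OF indZ[OF that]] by blast
    then show ?thesis unfolding XX_def by (rule someI_ex)
  qed
  define b where "b = (\<lambda>k. Im #>\<^bsub>HB\<^esub> XX k)"
  have bK: "b \<in> Kx \<rightarrow> carrier Q" unfolding b_def Qc using XX by auto
  have Pb: "\<forall>k\<in>Kx. PsiQ (b k) = ind k" unfolding b_def using XX PsiQ(2) by auto
  have ib: "inj_on b Kx"
  proof (rule inj_onI)
    fix k k' assume k: "k \<in> Kx" and k': "k' \<in> Kx" and e: "b k = b k'"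
    have "ind k = ind k'" using Pb k k' e by metis
    then have "ind k k = ind k' k" by simp
    then show "k = k'" by (simp add: ind_def split: if_splits)
  qed
  have PZ: "\<forall>x\<in>carrier Q. PsiQ x \<in> Zf Kx" unfolding Qc using PsiQ(2) PhiH_Zf by auto
  have Pk: "\<forall>x\<in>carrier Q. PsiQ x = 0 \<longrightarrow> x = \<one>\<^bsub>Q\<^esub>"
  proof (intro ballI impI)
    fix x assume x: "x \<in> carrier Q" and z: "PsiQ x = 0"
    obtain Xh where Xh: "Xh \<in> carrier HB" "x = Im #>\<^bsub>HB\<^esub> Xh" using x Qc by auto
    have "Xh \<in> Im" using ImK Xh PsiQ(2) z by auto
    then have "Im #>\<^bsub>HB\<^esub> Xh = Im" by (rule HBc.coset_join2[OF Xh(1) sgI])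
    then show "x = \<one>\<^bsub>Q\<^esub>" using Xh(2) Q1 by simp
  qed
  have fab: "free_abelian_basis Q (b ` Kx) id"
    by (rule fab_from_zhom_img[OF cQ Kx_fin bK ib PsiQ(1) PZ Pb Pk])
  have cB: "card (b ` Kx) = card Kx" using card_image[OF ib] .
  have cE: "card Kx + card V0 = card Dg + card (V0 // ((grel Dg srcf tgtf)\<^sup>* \<inter> V0 \<times> V0))"
    using GD by blast
  have cD: "card Dg = (\<Sum>i\<in>{1..m}. card (S i))"
  proof (rule card_SigmaI)
    show "finite {1..m}" by simp
    show "\<forall>i\<in>{1..m}. finite (S i)" using finite_Dg by (metis S_sub finite_atLeastAtMost finite_subset)
  qed
  have cV: "card V0 = m + n"
  proof -
    have "card V0 = card (Inl ` {1..m} :: (nat + nat) set) + card (Inr ` {1..n} :: (nat + nat) set)"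
      unfolding V0_def by (rule card_Un_disjoint) auto
    also have "\<dots> = m + n" by (simp add: card_image)
    finally show ?thesis .
  qed
  have cC: "num_components (Lambda_vertices m n) (Lambda_edges m S) =
      card (V0 // ((grel Dg srcf tgtf)\<^sup>* \<inter> V0 \<times> V0))"
  proof -
    have "Lambda_vertices m n = V0" unfolding Lambda_vertices_def V0_def ..
    moreover have "Lambda_edges m S = grel Dg srcf tgtf"
      unfolding Lambda_edges_def grel_def srcf_def tgtf_def by auto
    ultimately show ?thesis unfolding num_components_def by simp
  qed
  have "int (card (b ` Kx)) = (\<Sum>i\<in>{1..m}. int (card (S i))) - int n - int m
        + int (num_components (Lambda_vertices m n) (Lambda_edges m S))"
  proof -
    have "int (card Kx) + int m + int n = int (\<Sum>i\<in>{1..m}. card (S i)) +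
        int (num_components (Lambda_vertices m n) (Lambda_edges m S))"
      using cE cD cV cC by (metis of_nat_add add.assoc)
    then show ?thesis unfolding cB by (simp add: of_nat_sum)
  qed
  then show ?thesis using fab unfolding Q_def Im_def by blast
qed

end



theorem mainTheorem15:
  fixes G :: "('g, 'x) monoid_scheme" and a :: "nat \<Rightarrow> 'g"
    and n m :: nat and S :: "nat \<Rightarrow> nat set"
  assumes grp: "group G"
    and gens: "a \<in> {1..n} \<rightarrow> carrier G"
    and generates: "generate G (a ` {1..n}) = carrier G"
    and central: "\<forall>g\<in>carrier G. prod_gens G a n \<otimes>\<^bsub>G\<^esub> g = g \<otimes>\<^bsub>G\<^esub> prod_gens G a n"
    and S_sub: "\<forall>i\<in>{1..m}. S i \<subseteq> {1..n}"
    and S_ne: "\<forall>i\<in>{1..m}. S i \<noteq> {}"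
    and S_int: "\<forall>i\<in>{1..m}. \<forall>r\<in>{1..m}. i \<noteq> r \<longrightarrow> card (S i \<inter> S r) \<le> 1"
    and free_rank: "\<forall>i\<in>{1..m}. free_of_rank (GbarS G a n (S i)) (card (S i) - 1)"
    and free_bases: "\<forall>i\<in>{1..m}. \<forall>j0\<in>S i.
                       free_basis (GbarS G a n (S i)) (S i - {j0}) (abarS G a n (S i))"
    and G_ab: "free_abelian_basis (abelianization G) {1..n}
                 (\<lambda>j. derived G (carrier G) #>\<^bsub>G\<^esub> a j)"
    and A_ab: "free_abelian_basis (abelianization (Aprod G a n m S)) (Sigma {1..m} S)
                 (\<lambda>ij. derived (Aprod G a n m S) (carrier (Aprod G a n m S))
                         #>\<^bsub>Aprod G a n m S\<^esub> aA G a n m S ij)"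
  shows "\<exists>B. free_abelian_basis
               (abelianization (Abar G a n m S)
                  Mod (rho_bar_ab G a n m S ` carrier (abelianization (Gbar G a n)))) B id
           \<and> int (card B) = (\<Sum>i\<in>{1..m}. int (card (S i))) - int n - int m
                             + int (num_components (Lambda_vertices m n) (Lambda_edges m S))"
proof -
  have "setting G a n m S"
    unfolding setting_def using grp gens generates central S_sub A_ab by blast
  then show ?thesis by (rule setting.final)
qed

end
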